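(* Let $i\ge 3$ and $k\ge 3$ be integers. Then: (a) $g_3(F_i,F_{i+2},F_{i+k})=(4F_i-1)F_{i+2}-F_i$ whenever $k\ge i+3$; (b) $g_3(F_i,F_{i+2},F_{2i+2})=(F_i-1)F_{i+2}+F_{2i+2}-F_i$; (c) $g_3(F_i,F_{i+2},F_{2i+1})=(F_i+F_{i-2}-1)F_{i+2}+F_{2i+1}-F_i$; (d) $g_3(F_i,F_{i+2},F_{2i})=(F_i-1)F_{i+2}+2F_{2i}-F_i$; (e) $g_3(F_i,F_{i+2},F_{2i-1})=(F_{i-2}-1)F_{i+2}+3F_{2i-1}-F_i$ for $i\ge 4$; (f) $g_3(F_i,F_{i+2},F_{2i-2})=(F_{i-5}-1)F_{i+2}+5F_{2i-2}-F_i$ for $i\ge 6$, and $g_3(F_5,F_7,F_8)=F_7+4F_8-F_5=92$; (g) if $r=\lfloor (F_i-1)/F_k\rfloor\ge 3$ (equivalently $k\le i-3$), then $$g_3(F_i,F_{i+2},F_{i+k})=\begin{cases}(F_i-rF_k-1)F_{i+2}+(r+3)F_{i+k}-F_i & \text{if } (F_i-rF_k)F_{i+2}\ge F_{k-2}F_i,\\ (F_k-1)F_{i+2}+(r+2)F_{i+k}-F_i & \text{if } (F_i-rF_k)F_{i+2}< F_{k-2}F_i.\end{cases}$$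
   Context: Fibonacci numbers: $F_0=0$, $F_1=1$, $F_n=F_{n-1}+F_{n-2}$. For positive integers $a_1,\dots,a_l$ with $\gcd(a_1,\dots,a_l)=1$ and an integer $n$, let $d(n;a_1,\dots,a_l)$ be the number of tuples $(x_1,\dots,x_l)$ of nonnegative integers with $a_1x_1+\dots+a_lx_l=n$. For a nonnegative integer $p$, the $p$-Frobenius number $g_p(a_1,\dots,a_l)$ is the largest integer $n$ with $d(n;a_1,\dots,a_l)\le p$. *)

theory Defs
  imports "HOL-Number_Theory.Fib"
begin

definition num_repr :: "int \<Rightarrow> nat list \<Rightarrow> nat" where
  "num_repr n as = card {xs :: nat list. length xs = length as \<and>
      int (\<Sum>j<length as. as ! j * xs ! j) = n}"

definition p_frobenius :: "nat \<Rightarrow> nat list \<Rightarrow> int" where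
  "p_frobenius p as = (GREATEST n :: int. num_repr n as \<le> p)"

abbreviation F :: "nat \<Rightarrow> int" where
  "F n \<equiv> int (fib n)"

end

theory Submission
  imports Defs "HOL-Number_Theory.Cong"
begin


definition Sol :: "nat \<Rightarrow> nat \<Rightarrow> nat \<Rightarrow> int \<Rightarrow> (nat\<times>nat\<times>nat) set" where
  "Sol A B C n = {(x,y,z). int (A*x+B*y+C*z) = n}"

lemma num_repr_eq: "num_repr n [A,B,C] = card (Sol A B C n)"
proof -
  have e: "{xs :: nat list. length xs = length [A,B,C] \<and>
      int (\<Sum>j<length [A,B,C]. [A,B,C] ! j * xs ! j) = n} = (\<lambda>(x,y,z). [x,y,z]) ` Sol A B C n"
  proof (rule set_eqI, rule iffI)
    fix xs :: "nat list"
    assume h: "xs \<in> {xs :: nat list. length xs = length [A,B,C] \<and>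
      int (\<Sum>j<length [A,B,C]. [A,B,C] ! j * xs ! j) = n}"
    then have l: "length xs = 3" by simp
    have "xs = [xs!0, xs!1, xs!2]" using l
      by (intro nth_equalityI) (auto simp: less_Suc_eq nth_Cons numeral_3_eq_3 numeral_2_eq_2 split: nat.splits)
    then obtain x y z where xs: "xs = [x,y,z]" by blast
    have "int (A*x+B*y+C*z) = n" using h unfolding xs by (simp add: numeral_3_eq_3 lessThan_Suc)
    then show "xs \<in> (\<lambda>(x,y,z). [x,y,z]) ` Sol A B C n" unfolding xs Sol_def by force
  next
    fix xs :: "nat list"
    assume "xs \<in> (\<lambda>(x,y,z). [x,y,z]) ` Sol A B C n"
    then obtain x y z where xs: "xs = [x,y,z]" and "int (A*x+B*y+C*z) = n" unfolding Sol_def by auto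
    then show "xs \<in> {xs :: nat list. length xs = length [A,B,C] \<and>
      int (\<Sum>j<length [A,B,C]. [A,B,C] ! j * xs ! j) = n}"
      by (simp add: numeral_3_eq_3 lessThan_Suc add.assoc)
  qed
  have "inj_on (\<lambda>(x,y,z). [x,y,z]) (Sol A B C n)" by (auto simp: inj_on_def)
  then show ?thesis unfolding num_repr_def e by (simp add: card_image)
qed

lemma Sol_finite: assumes "A > 0" "B > 0" "C > 0" shows "finite (Sol A B C n)"
proof -
  have "Sol A B C n \<subseteq> {0..nat n} \<times> {0..nat n} \<times> {0..nat n}"
  proof
    fix t assume "t \<in> Sol A B C n"
    then obtain x y z where t: "t = (x,y,z)" and e: "int (A*x+B*y+C*z) = n" unfolding Sol_def by auto
    have nn: "nat n = A*x+B*y+C*z" using e by (metis nat_int)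
    have "x \<le> A*x" "y \<le> B*y" "z \<le> C*z" using assms by auto
    then have "x \<le> nat n" "y \<le> nat n" "z \<le> nat n" unfolding nn by linarith+
    then show "t \<in> {0..nat n} \<times> {0..nat n} \<times> {0..nat n}" using t by auto
  qed
  then show ?thesis by (rule finite_subset) auto
qed

lemma frob_main:
  fixes A B C P Q :: nat and G s :: int
  assumes pos: "A > 0" "B > 0" "C > 0"
    and cop: "coprime A B"
    and Ceq: "int C = int B * int P - int Q * int A"
    and wit: "\<And>s0. 0 \<le> s0 \<Longrightarrow> s0 < int A \<Longrightarrow> \<exists>T. finite T \<and> 4 \<le> card T \<and>
        (\<forall>(j,z)\<in>T. 0 \<le> j \<and> 0 \<le> z \<and> int P*z \<le> s0 + j*int A \<and>
            int B*s0 + int A*(j*int B - int Q*z) \<le> G + int A)"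
    and s: "0 \<le> s" "s < int A" "int A dvd G - int B * s"
    and cnt: "\<exists>T. finite T \<and> card T \<le> 3 \<and> (\<forall>j z. 0 \<le> j \<longrightarrow> 0 \<le> z \<longrightarrow>
        int P*z \<le> s + j*int A \<longrightarrow> int B*s + int A*(j*int B - int Q*z) \<le> G \<longrightarrow> (j,z) \<in> T)"
  shows "p_frobenius 3 [A,B,C] = G"
proof -
  have copi: "coprime (int A) (int B)" using cop by simp
  have low: "card (Sol A B C G) \<le> 3"
  proof -
    obtain T where T: "finite T" "card T \<le> 3" and TT: "\<And>j z. 0 \<le> j \<Longrightarrow> 0 \<le> z \<Longrightarrow>
        int P*z \<le> s + j*int A \<Longrightarrow> int B*s + int A*(j*int B - int Q*z) \<le> G \<Longrightarrow> (j,z) \<in> T"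
      using cnt by blast
    define f where "f = (\<lambda>(x::nat,y::nat,z::nat). ((int y + int P * int z - s) div int A, int z))"
    have key: "int A dvd (int y + int P * int z - s) \<and> f (x,y,z) \<in> T" if "(x,y,z) \<in> Sol A B C G" for x y z
    proof -
      have e: "int A * int x + int B * int y + int C * int z = G" using that unfolding Sol_def by simp
      define t where "t = int y + int P * int z - s"
      have "int B * t = G - int B * s - int A * int x + int Q * int A * int z"
        unfolding t_def using e Ceq by (simp add: algebra_simps)
      then have "int B * t = (G - int B * s) + int A * (int Q * int z - int x)"
        by (simp add: algebra_simps)
      then have "int A dvd int B * t" using s(3) by simp
      then have d: "int A dvd t" using copi by (simp add: coprime_dvd_mult_right_iff)
      then obtain j where tj: "t = int A * j" by auto
      have jd: "t div int A = j" using tj pos by simp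
      have j0: "0 \<le> j"
      proof (rule ccontr)
        assume "\<not> 0 \<le> j"
        then have "j \<le> -1" by simp
        then have "int A * j \<le> int A * (-1)" by (intro mult_left_mono) auto
        then have "int A * j \<le> - int A" by simp
        moreover have "0 \<le> int P * int z" by simp
        then have "t > - int A" unfolding t_def using s by linarith
        ultimately show False using tj by simp
      qed
      have "(j, int z) \<in> T"
      proof (rule TT)
        show "int P * int z \<le> s + j * int A" using tj unfolding t_def by (simp add: algebra_simps)
        have "int B*s + int A*(j*int B - int Q* int z) = int B * (s + t) - int A * int Q * int z"
          using tj by (simp add: algebra_simps)
        also have "\<dots> = int B * int y + int C * int z" unfolding t_def
          using arg_cong[OF Ceq, of "\<lambda>v. v * int z"] by (simp add: algebra_simps)
        also have "\<dots> \<le> G" using e by (simp add: add.assoc) (metis add_increasing of_nat_0_le_iff zero_le_mult_iff order.refl)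
        finally show "int B*s + int A*(j*int B - int Q* int z) \<le> G" .
      qed (use j0 in auto)
      then show ?thesis using d jd unfolding f_def t_def by simp
    qed
    have inj: "inj_on f (Sol A B C G)"
    proof (rule inj_onI)
      fix u v assume u: "u \<in> Sol A B C G" and v: "v \<in> Sol A B C G" and fe: "f u = f v"
      obtain x y z where ux: "u = (x,y,z)" by (cases u) auto
      obtain x' y' z' where vx: "v = (x',y',z')" by (cases v) auto
      have zz: "z = z'" using fe unfolding ux vx f_def by simp
      have d1: "int A dvd (int y + int P * int z - s)" using key u ux by blast
      have d2: "int A dvd (int y' + int P * int z' - s)" using key v vx by blast
      have "(int y + int P * int z - s) div int A = (int y' + int P * int z' - s) div int A"
        using fe unfolding ux vx f_def by auto
      then have "int y + int P * int z - s = int y' + int P * int z' - s"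
        using d1 d2 by (metis dvd_div_mult_self)
      then have yy: "y = y'" using zz by simp
      have "int A * int x + int B * int y + int C * int z = G" using u ux unfolding Sol_def by simp
      moreover have "int A * int x' + int B * int y' + int C * int z' = G" using v vx unfolding Sol_def by simp
      ultimately have "int A * int x = int A * int x'" using yy zz by (metis add_right_cancel)
      then have "x = x'" using pos by simp
      then show "u = v" using ux vx yy zz by simp
    qed
    have "f ` Sol A B C G \<subseteq> T" using key by auto
    then have "card (f ` Sol A B C G) \<le> card T" using T by (simp add: card_mono)
    then show ?thesis using inj T by (simp add: card_image)
  qed
  have high: "4 \<le> card (Sol A B C n)" if nG: "n > G" for n
  proof -
    obtain u where u: "[int B * u = 1] (mod int A)"
      using cong_solve_coprime_int[of "int B" "int A"] copi by (auto simp: coprime_commute)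
    define s0 where "s0 = (u * n) mod int A"
    have s0r: "0 \<le> s0" "s0 < int A" unfolding s0_def using pos by auto
    have s0c: "(int B * s0) mod int A = n mod int A"
    proof -
      have "(int B * s0) mod int A = (int B * (u * n)) mod int A" unfolding s0_def by (simp add: mod_mult_right_eq)
      also have "\<dots> = ((int B * u) * n) mod int A" by (simp add: mult.assoc)
      also have "\<dots> = (1 * n) mod int A" using u unfolding cong_def by (intro mod_mult_cong) auto
      finally show ?thesis by simp
    qed
    obtain T where T: "finite T" "4 \<le> card T" and TT: "\<And>j z. (j,z)\<in>T \<Longrightarrow> 0 \<le> j \<and> 0 \<le> z \<and> int P*z \<le> s0 + j*int A \<and>
            int B*s0 + int A*(j*int B - int Q*z) \<le> G + int A"
      using wit[OF s0r] by blast
    define V where "V = (\<lambda>(j,z). int B*s0 + int A*(j*int B - int Q*z))"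
    define g where "g = (\<lambda>(j::int,z::int). (nat ((n - V (j,z)) div int A), nat (s0 + j * int A - int P * z), nat z))"
    have gin: "g (j,z) \<in> Sol A B C n" if jz: "(j,z) \<in> T" for j z
    proof -
      have h: "0 \<le> j" "0 \<le> z" "int P*z \<le> s0 + j*int A" "V (j,z) \<le> G + int A" using TT[OF jz] unfolding V_def by auto
      have "V (j,z) mod int A = (int B * s0) mod int A" unfolding V_def by simp
      then have "V (j,z) mod int A = n mod int A" using s0c by simp
      then have "int A dvd n - V (j,z)" by (metis mod_eq_dvd_iff)
      then obtain m where m: "n - V (j,z) = int A * m" by auto
      have m0: "0 \<le> m"
      proof (rule ccontr)
        assume "\<not> 0 \<le> m"
        then have "m \<le> -1" by simp
        then have "int A * m \<le> int A * (-1)" by (intro mult_left_mono) auto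
        then have "int A * m \<le> - int A" by simp
        then show False using m h(4) nG by simp
      qed
      have md: "(n - V (j,z)) div int A = m" using m pos by simp
      have "int (A * nat m + B * nat (s0 + j * int A - int P * z) + C * nat z)
          = int A * m + int B * (s0 + j * int A - int P * z) + int C * z"
        using m0 h by simp
      also have "\<dots> = int A * m + V (j,z)" unfolding V_def
        using arg_cong[OF Ceq, of "\<lambda>v. v * z"] h by (simp add: algebra_simps)
      also have "\<dots> = n" using m by simp
      finally show ?thesis unfolding g_def Sol_def using md by simp
    qed
    have ginj: "inj_on g T"
    proof (rule inj_onI)
      fix u v assume u: "u \<in> T" and v: "v \<in> T" and ge: "g u = g v"
      obtain j z where ux: "u = (j,z)" by (cases u) auto
      obtain j' z' where vx: "v = (j',z')" by (cases v) auto
      have h1: "0 \<le> j" "0 \<le> z" "int P*z \<le> s0 + j*int A" using TT u ux by auto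
      have h2: "0 \<le> j'" "0 \<le> z'" "int P*z' \<le> s0 + j'*int A" using TT v vx by auto
      have "nat z = nat z'" "nat (s0 + j * int A - int P * z) = nat (s0 + j' * int A - int P * z')"
        using ge unfolding ux vx g_def by auto
      then have "z = z'" "s0 + j * int A - int P * z = s0 + j' * int A - int P * z'" using h1 h2 by auto
      then have "z = z'" "j * int A = j' * int A" by auto
      then show "u = v" using ux vx pos by simp
    qed
    have "card T = card (g ` T)" using ginj by (simp add: card_image)
    also have "\<dots> \<le> card (Sol A B C n)" using gin Sol_finite[OF pos] by (intro card_mono) auto
    finally show ?thesis using T by simp
  qed
  show ?thesis unfolding p_frobenius_def
  proof (rule Greatest_equality)
    show "num_repr G [A, B, C] \<le> 3" using low by (simp add: num_repr_eq)
    fix y assume "num_repr y [A, B, C] \<le> 3"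
    then show "y \<le> G" using high[of y] by (simp add: num_repr_eq) (meson not_le not_less_eq_eq)
  qed
qed



lemma fib_shift: "k \<ge> 2 \<Longrightarrow> fib (i+k) + fib (k-2) * fib i = fib k * fib (i+2)"
proof -
  assume "k \<ge> 2"
  then obtain m where k: "k = Suc (Suc m)" by (metis add_2_eq_Suc le_Suc_ex)
  have a: "fib (Suc (i + Suc m)) = fib (Suc (Suc m)) * fib (Suc i) + fib (Suc m) * fib i" by (rule fib_add)
  have b: "fib (Suc (Suc m)) = fib (Suc m) + fib m" by (simp)
  have c: "fib (i+2) = fib (Suc i) + fib i" by (simp add: fib_plus_2)
  have "i + k = Suc (i + Suc m)" using k by simp
  then show ?thesis using a b c k by (simp add: algebra_simps)
qed

lemma fib_shift_int: "k \<ge> 2 \<Longrightarrow> int (fib (i+k)) = int (fib (i+2)) * int (fib k) - int (fib (k-2)) * int (fib i)"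
  using fib_shift[of k i] by (simp add: algebra_simps) (metis add_diff_cancel_right' mult.commute of_nat_add of_nat_mult)

lemma fib_coprime2: "coprime (fib i) (fib (i+2))"
proof -
  have "gcd (fib i) (fib (2 + i)) = gcd (fib i) (fib 2)" by (rule gcd_fib_add)
  then show ?thesis by (simp add: coprime_iff_gcd_eq_1 add.commute)
qed

lemma fib_base:
  assumes "i \<ge> 3"
  shows "int (fib (i+2)) = 2 * int (fib i) + int (fib (i-1))"
    "int (fib i) = int (fib (i-1)) + int (fib (i-2))"
    "int (fib (i-1)) = int (fib (i-2)) + int (fib (i-3))"
    "int (fib (i-3)) \<le> int (fib (i-2))" "1 \<le> int (fib (i-2))"
    "int (fib (i+1)) = int (fib i) + int (fib (i-1))"
proof -
  obtain m where i: "i = Suc (Suc (Suc m))" using assms by (intro that[of "i-3"]) arith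
  show "int (fib (i+2)) = 2 * int (fib i) + int (fib (i-1))" unfolding i by simp
  show "int (fib i) = int (fib (i-1)) + int (fib (i-2))" unfolding i by simp
  show "int (fib (i-1)) = int (fib (i-2)) + int (fib (i-3))" unfolding i by (simp add: numeral_3_eq_3)
  show "int (fib (i-3)) \<le> int (fib (i-2))" unfolding i using fib_Suc_mono[of m] by (simp add: numeral_3_eq_3)
  show "1 \<le> int (fib (i-2))" unfolding i using fib_neq_0_nat[of "Suc m"] by simp
  show "int (fib (i+1)) = int (fib i) + int (fib (i-1))" unfolding i by simp
qed

lemma fib_k2: assumes "k \<ge> 3" shows "1 \<le> int (fib (k-2))" "2 * int (fib (k-2)) \<le> int (fib k)"
proof -
  obtain m where k: "k = Suc (Suc (Suc m))" using assms by (intro that[of "k-3"]) arith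
  show "1 \<le> int (fib (k-2))" unfolding k using fib_neq_0_nat[of "Suc m"] by simp
  show "2 * int (fib (k-2)) \<le> int (fib k)" unfolding k using fib_Suc_mono[of "Suc m"] by simp
qed



definition wit_ok :: "int \<Rightarrow> int \<Rightarrow> int \<Rightarrow> int \<Rightarrow> int \<Rightarrow> bool" where
  "wit_ok a b p q G \<longleftrightarrow> (\<forall>s0. 0 \<le> s0 \<longrightarrow> s0 < a \<longrightarrow> (\<exists>T. finite T \<and> 4 \<le> card T \<and>
        (\<forall>(j,z)\<in>T. 0 \<le> j \<and> 0 \<le> z \<and> p*z \<le> s0 + j*a \<and>
            b*s0 + a*(j*b - q*z) \<le> G + a)))"

definition cnt_ok :: "int \<Rightarrow> int \<Rightarrow> int \<Rightarrow> int \<Rightarrow> int \<Rightarrow> int \<Rightarrow> bool" where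
  "cnt_ok a b p q G s \<longleftrightarrow> 0 \<le> s \<and> s < a \<and> a dvd G - b * s \<and>
     (\<exists>T. finite T \<and> card T \<le> 3 \<and> (\<forall>j z. 0 \<le> j \<longrightarrow> 0 \<le> z \<longrightarrow>
        p*z \<le> s + j*a \<longrightarrow> b*s + a*(j*b - q*z) \<le> G \<longrightarrow> (j,z) \<in> T))"

lemma frob_fib:
  fixes i k :: nat and G s :: int
  assumes "i \<ge> 3" "k \<ge> 3"
    and "wit_ok (F i) (F (i+2)) (F k) (F (k-2)) G"
    and "cnt_ok (F i) (F (i+2)) (F k) (F (k-2)) G s"
  shows "p_frobenius 3 [fib i, fib (i+2), fib (i+k)] = G"
  by (rule frob_main[where P="fib k" and Q="fib (k-2)" and s=s])
     (use assms fib_neq_0_nat fib_coprime2 fib_shift_int in \<open>auto simp: wit_ok_def cnt_ok_def\<close>)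

lemma cnt3I:
  assumes "0 \<le> s" "s < a" "a dvd G - b * s"
    and "\<And>j z. 0 \<le> j \<Longrightarrow> 0 \<le> z \<Longrightarrow> p*z \<le> s + j*a \<Longrightarrow> b*s + a*(j*b - q*z) \<le> G \<Longrightarrow> (j,z) \<in> {u,v,w}"
  shows "cnt_ok a b p q G s"
  unfolding cnt_ok_def using assms by (intro conjI exI[of _ "{u,v,w}"]) (auto simp: card_insert_if)

lemma wit4I:
  assumes "card {u,v,w,x} = 4"
    and "\<forall>(j,z)\<in>{u,v,w,x}. 0 \<le> j \<and> 0 \<le> z \<and> p*z \<le> s0 + j*a \<and> b*s0 + a*(j*b - q*z) \<le> G + a"
  shows "\<exists>T. finite T \<and> 4 \<le> card T \<and>
        (\<forall>(j,z)\<in>T. 0 \<le> j \<and> 0 \<le> z \<and> p*z \<le> s0 + j*a \<and> b*s0 + a*(j*b - q*z) \<le> G + a)"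
  using assms by (intro exI[of _ "{u,v,w,x}"]) auto

definition okw :: "int \<Rightarrow> int \<Rightarrow> int \<Rightarrow> int \<Rightarrow> int \<Rightarrow> int \<Rightarrow> int \<times> int \<Rightarrow> bool" where
  "okw a b p q G s0 jz \<longleftrightarrow> (case jz of (j,z) \<Rightarrow> 0 \<le> j \<and> 0 \<le> z \<and> p*z \<le> s0 + j*a \<and> b*s0 + a*(j*b - q*z) \<le> G + a)"

lemma okwI: "0 \<le> j \<Longrightarrow> 0 \<le> z \<Longrightarrow> p*z \<le> s0 + j*a \<Longrightarrow> b*s0 + a*(j*b - q*z) \<le> G + a \<Longrightarrow> okw a b p q G s0 (j,z)"
  by (simp add: okw_def)

lemma wit4I':
  assumes "card {u,v,w,x} = 4" "okw a b p q G s0 u" "okw a b p q G s0 v" "okw a b p q G s0 w" "okw a b p q G s0 x"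
  shows "\<exists>T. finite T \<and> 4 \<le> card T \<and>
        (\<forall>(j,z)\<in>T. 0 \<le> j \<and> 0 \<le> z \<and> p*z \<le> s0 + j*a \<and> b*s0 + a*(j*b - q*z) \<le> G + a)"
  using assms unfolding okw_def by (intro exI[of _ "{u,v,w,x}"]) auto


lemma arith_a:
  fixes a b p q :: int
  assumes "a \<ge> 2" "2*b \<ge> 5*a" "b > a" "p \<ge> 4*a" "q \<ge> 1" "p \<ge> 2*q"
  shows "wit_ok a b p q ((4*a-1)*b - a)" "cnt_ok a b p q ((4*a-1)*b - a) (a - 1)"
proof -
  show "wit_ok a b p q ((4*a-1)*b - a)" unfolding wit_ok_def
  proof (intro allI impI)
    fix s0 assume s0: "0 \<le> s0" "s0 < a"
    have m: "b * s0 \<le> b * (a - 1)" using s0 assms by (intro mult_left_mono) auto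
    have ab: "0 < a * b" using assms by simp
    show "\<exists>T. finite T \<and> 4 \<le> card T \<and> (\<forall>(j,z)\<in>T. 0 \<le> j \<and> 0 \<le> z \<and> p*z \<le> s0 + j*a \<and>
            b*s0 + a*(j*b - q*z) \<le> (4*a-1)*b - a + a)"
    proof (rule wit4I')
      show "card {(0,0),(1,0),(2,0),(3::int,0::int)} = 4" by simp
      show "okw a b p q ((4*a-1)*b - a) s0 (0,0)" by (rule okwI) (use s0 m ab assms in \<open>((simp only: algebra_simps)?; linarith)\<close>)+
      show "okw a b p q ((4*a-1)*b - a) s0 (1,0)" by (rule okwI) (use s0 m ab assms in \<open>((simp only: algebra_simps)?; linarith)\<close>)+
      show "okw a b p q ((4*a-1)*b - a) s0 (2,0)" by (rule okwI) (use s0 m ab assms in \<open>((simp only: algebra_simps)?; linarith)\<close>)+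
      show "okw a b p q ((4*a-1)*b - a) s0 (3,0)" by (rule okwI) (use s0 m ab assms in \<open>((simp only: algebra_simps)?; linarith)\<close>)+
    qed
  qed
  show "cnt_ok a b p q ((4*a-1)*b - a) (a - 1)"
  proof (rule cnt3I[where u="(0,0)" and v="(1,0)" and w="(2,0)"])
    show "a dvd (4 * a - 1) * b - a - b * (a - 1)" by (rule dvdI[of _ _ "3 * b - 1"]) (simp add: algebra_simps)
  next
    fix j z assume hj: "0 \<le> j" and hz: "0 \<le> z" and h1: "p*z \<le> (a - 1) + j*a"
      and h2: "b*(a-1) + a*(j*b - q*z) \<le> (4*a-1)*b - a"
    have "a*(j*b - q*z) \<le> a*(3*b - 1)" using h2 by (simp add: algebra_simps)
    then have v: "j*b - q*z \<le> 3*b - 1" using assms(1) by simp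
    show "(j,z) \<in> {(0,0),(1,0),(2,0)}"
    proof (cases "z = 0")
      case True
      then have "j*b < 3*b" using v by simp
      then have "j < 3" using assms by (simp add: mult_less_cancel_right)
      then show ?thesis using True hj by auto
    next
      case False
      then have z1: "z \<ge> 1" using hz by simp
      have "p \<le> p*z" using z1 assms by simp
      show ?thesis
      proof (cases "j \<le> 3")
        case True
        then have "j*a \<le> 3*a" using assms by (simp add: mult_right_mono)
        then show ?thesis using \<open>p \<le> p*z\<close> h1 assms by linarith
      next
        case False
        have qz: "q*z \<ge> (j-3)*b + 1" using v by (simp add: algebra_simps)
        have e1: "p*(q*z) \<ge> p*((j-3)*b + 1)" using qz assms by (intro mult_left_mono) auto
        have e2: "q*(p*z) \<le> q*((a-1) + j*a)" using h1 assms by (intro mult_left_mono) auto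
        have f1: "p*b \<ge> (2*q)*b" using assms by (intro mult_right_mono) auto
        have f2: "q*(2*b) \<ge> q*(5*a)" using assms by (intro mult_left_mono) auto
        have f3: "q*a > 0" using assms by simp
        have pbq: "p*b - q*a > 0" using f1 f2 f3 by (simp only: algebra_simps; linarith)
        have e3: "j*(p*b - q*a) \<ge> 4*(p*b - q*a)" using False pbq by (intro mult_right_mono) auto
        show ?thesis using e1 e2 e3 f1 f2 assms by (simp only: algebra_simps; linarith)
      qed
    qed
  qed (use assms in auto)
qed

lemma part_a:
  assumes "i \<ge> 3" "k \<ge> i + 3"
  shows "p_frobenius 3 [fib i, fib (i+2), fib (i+k)] = (4 * F i - 1) * F (i+2) - F i"
proof -
  note fb = fib_base[OF assms(1)]
  have k3: "k \<ge> 3" using assms by simp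
  note fk = fib_k2[OF k3]
  have "fib (i+3) \<le> fib k" using assms by (intro fib_mono) simp
  moreover have "fib (i+3) = fib (i+2) + fib (i+1)" by (simp add: numeral_3_eq_3)
  ultimately have pk: "F k \<ge> F (i+2) + F (i+1)" by simp
  show ?thesis
    by (rule frob_fib[OF assms(1) k3 arith_a]) (use fb fk pk in linarith)+
qed



lemma arith_b:
  fixes a b d :: int
  assumes a2: "a \<ge> 2" and bd: "b = 2*a + d" and d1: "1 \<le> d" and da: "d < a" and ad: "a \<le> 2*d"
  shows "wit_ok a b b a ((a-1)*b + (b*b - a*a) - a)" "cnt_ok a b b a ((a-1)*b + (b*b - a*a) - a) (d - 1)"
proof -
  have K1: "a*a \<le> a*(2*d)" using ad a2 by (intro mult_left_mono) auto
  have ab: "a*b = 2*(a*a) + a*d" "b*b = 4*(a*a) + 4*(a*d) + d*d" "b*d = 2*(a*d) + d*d" using bd by (simp_all add: algebra_simps)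
  have dd: "d*d > 0" "a*d > 0" "a*a > 0" "b*d > 0" "a*b > 0" using d1 a2 bd by simp_all
  have bb2: "b*b = 2*(a*b) + b*d" using bd by (simp add: algebra_simps)
  have K2: "2*(a*b) \<le> b*b - a*a" using ab K1 dd by linarith
  show "wit_ok a b b a ((a-1)*b + (b*b - a*a) - a)" unfolding wit_ok_def
  proof (intro allI impI)
    fix s0 assume s0: "0 \<le> s0" "s0 < a"
    have m: "b * s0 \<le> b * (a - 1)" using s0 assms by (intro mult_left_mono) auto
    show "\<exists>T. finite T \<and> 4 \<le> card T \<and> (\<forall>(j,z)\<in>T. 0 \<le> j \<and> 0 \<le> z \<and> b*z \<le> s0 + j*a \<and>
            b*s0 + a*(j*b - a*z) \<le> (a-1)*b + (b*b - a*a) - a + a)"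
    proof (cases "s0 < d")
      case True
      have m2: "b * s0 \<le> b * (d - 1)" using s0 True assms by (intro mult_left_mono) auto
      show ?thesis
      proof (rule wit4I')
  show "card {(0,0),(1,0),(2,0),(3::int,1::int)} = 4" by simp
  show "okw a b b a ((a-1)*b + (b*b - a*a) - a) s0 (0,0)" by (rule okwI) (use s0 m m2 K2 bb2 dd bd da a2 in \<open>((simp only: algebra_simps)?; linarith)\<close>)+
  show "okw a b b a ((a-1)*b + (b*b - a*a) - a) s0 (1,0)" by (rule okwI) (use s0 m m2 K2 bb2 dd bd da a2 in \<open>((simp only: algebra_simps)?; linarith)\<close>)+
  show "okw a b b a ((a-1)*b + (b*b - a*a) - a) s0 (2,0)" by (rule okwI) (use s0 m m2 K2 bb2 dd bd da a2 in \<open>((simp only: algebra_simps)?; linarith)\<close>)+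
  show "okw a b b a ((a-1)*b + (b*b - a*a) - a) s0 (3,1)" by (rule okwI) (use s0 m m2 K2 bb2 dd bd da a2 in \<open>((simp only: algebra_simps)?; linarith)\<close>)+
qed
    next
      case False
      show ?thesis
      proof (rule wit4I')
  show "card {(0,0),(1,0),(2,0),(2::int,1::int)} = 4" by simp
  show "okw a b b a ((a-1)*b + (b*b - a*a) - a) s0 (0,0)" by (rule okwI) (use s0 m False K2 bb2 dd bd da a2 in \<open>((simp only: algebra_simps)?; linarith)\<close>)+
  show "okw a b b a ((a-1)*b + (b*b - a*a) - a) s0 (1,0)" by (rule okwI) (use s0 m False K2 bb2 dd bd da a2 in \<open>((simp only: algebra_simps)?; linarith)\<close>)+
  show "okw a b b a ((a-1)*b + (b*b - a*a) - a) s0 (2,0)" by (rule okwI) (use s0 m False K2 bb2 dd bd da a2 in \<open>((simp only: algebra_simps)?; linarith)\<close>)+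
  show "okw a b b a ((a-1)*b + (b*b - a*a) - a) s0 (2,1)" by (rule okwI) (use s0 m False K2 bb2 dd bd da a2 in \<open>((simp only: algebra_simps)?; linarith)\<close>)+
qed
    qed
  qed
  show "cnt_ok a b b a ((a-1)*b + (b*b - a*a) - a) (d - 1)"
  proof (rule cnt3I[where u="(0,0)" and v="(1,0)" and w="(2,0)"])
    show "a dvd (a-1)*b + (b*b - a*a) - a - b * (d - 1)"
      by (rule dvdI[of _ _ "3 * b - a - 1"]) (use bd in \<open>simp add: algebra_simps\<close>)
  next
    fix j z assume hj: "0 \<le> j" and hz: "0 \<le> z" and h1: "b*z \<le> (d - 1) + j*a"
      and h2: "b*(d-1) + a*(j*b - a*z) \<le> (a-1)*b + (b*b - a*a) - a"
    have "a*(j*b - a*z) \<le> a*(3*b - a - 1)" using h2 ab by (simp only: algebra_simps; linarith)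
    then have v: "j*b - a*z \<le> 3*b - a - 1" using a2 by simp
    show "(j,z) \<in> {(0,0),(1,0),(2,0)}"
    proof (cases "z = 0")
      case True
      have "j < 3"
      proof (rule ccontr)
        assume "\<not> j < 3"
        then have "3*b \<le> j*b" using bd assms by (intro mult_right_mono) auto
        then show False using v True assms by simp
      qed
      then show ?thesis using True hj by auto
    next
      case False
      then have z1: "z \<ge> 1" using hz by simp
      have "b \<le> b*z" using z1 assms by simp
      have j3: "j \<ge> 3"
      proof (rule ccontr)
        assume "\<not> j \<ge> 3"
        then have "j*a \<le> 2*a" using assms by (intro mult_right_mono) auto
        then show False using \<open>b \<le> b*z\<close> h1 assms by linarith
      qed
      show ?thesis
      proof (cases "j = 3")
        case True
        have "a*z \<ge> a + 1" using v True by simp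
        have "z \<ge> 2"
        proof (rule ccontr)
          assume "\<not> z \<ge> 2"
          then have "a*z \<le> a*1" using a2 by (intro mult_left_mono) auto
          then show False using \<open>a*z \<ge> a + 1\<close> by simp
        qed
        then have "b*z \<ge> b*2" using assms by (intro mult_left_mono) auto
        moreover have "j*a = 3*a" using True by simp
        ultimately have False using h1 bd da d1 by linarith
        then show ?thesis by simp
      next
        case False
        then have j4: "j - 3 \<ge> 1" using j3 by simp
        have az: "a*z \<ge> (j-3)*b + a + 1" using v by (simp add: left_diff_distrib)
        have e1: "b*(a*z) \<ge> b*((j-3)*b + a + 1)" using az assms by (intro mult_left_mono) auto
        have e2: "a*(b*z) \<le> a*((d-1) + j*a)" using h1 assms by (intro mult_left_mono) auto
        have bb: "b*b - a*a \<ge> 3*(a*a)" using ab K1 dd by linarith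
        have e3: "(j-3)*(b*b - a*a) \<ge> 1*(b*b - a*a)" using j4 bb dd by (intro mult_right_mono) auto
        have aa: "a*a > 0" using a2 by simp
        have e4: "(j-3)*(b*b) + a*b + b \<le> a*d - a + (j-3)*(a*a) + 3*(a*a)"
          using e1 e2 by (simp only: algebra_simps; linarith)
        have e5: "(j-3)*(b*b) - (j-3)*(a*a) \<ge> b*b - a*a" using e3 by (simp add: right_diff_distrib)
        have False using e4 e5 bb ab aa a2 bd d1 by linarith
        then show ?thesis by simp
      qed
    qed
  qed (use assms in auto)
qed

lemma part_b:
  assumes "i \<ge> 3"
  shows "p_frobenius 3 [fib i, fib (i+2), fib (2*i+2)] = (F i - 1) * F (i+2) + F (2*i+2) - F i"
proof -
  note fb = fib_base[OF assms(1)]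
  have e: "2*i+2 = i + (i+2)" by simp
  have c: "F (i + (i+2)) = F (i+2) * F (i+2) - F i * F i" using fib_shift_int[of "i+2" i] by simp
  have q: "F (i+2-2) = F i" by simp
  have k3: "i+2 \<ge> 3" using assms by simp
  have ar: "wit_ok (F i) (F (i+2)) (F (i+2)) (F (i+2-2)) ((F i - 1)*F(i+2) + (F(i+2)*F(i+2) - F i*F i) - F i)"
     "cnt_ok (F i) (F (i+2)) (F (i+2)) (F (i+2-2)) ((F i - 1)*F(i+2) + (F(i+2)*F(i+2) - F i*F i) - F i) (F (i-1) - 1)"
    unfolding q by (rule arith_b[where d="F (i-1)"]; use fb in linarith)+
  show ?thesis unfolding e c by (rule frob_fib[OF assms(1) k3 ar])
qed



lemma arith_c:
  fixes a b d :: int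
  assumes a2: "a \<ge> 2" and bd: "b = 2*a + d" and d1: "1 \<le> d" and da: "d < a" and ad: "a \<le> 2*d" and d3: "3*d \<le> 2*a"
  shows "wit_ok a b (a+d) d ((2*a - d - 1)*b + (b*(a+d) - d*a) - a)"
        "cnt_ok a b (a+d) d ((2*a - d - 1)*b + (b*(a+d) - d*a) - a) (a - 1)"
proof -
  have pos: "d*d > 0" "a*d > 0" "a*a > 0" "b*d > 0" "a*b > 0" using d1 a2 bd by simp_all
  have ab: "a*b = 2*(a*a) + a*d" "b*d = 2*(a*d) + d*d" using bd by (simp_all add: algebra_simps)
  have K1: "a*d \<le> a*a" using da a2 by (intro mult_left_mono) auto
  have K2: "d*d \<le> a*d" using da d1 by (simp add: mult_right_mono)
  have K3: "3*(a*d) \<le> 2*(a*a)" using mult_left_mono[OF d3, of a] a2 by (simp add: algebra_simps)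
  have K4: "b*d \<le> a*b" using mult_left_mono[of d a b] da bd a2 d1 by (simp add: algebra_simps)
  show "wit_ok a b (a+d) d ((2*a - d - 1)*b + (b*(a+d) - d*a) - a)" unfolding wit_ok_def
  proof (intro allI impI)
    fix s0 assume s0: "0 \<le> s0" "s0 < a"
    have m: "b * s0 \<le> b * (a - 1)" using s0 assms by (intro mult_left_mono) auto
    show "\<exists>T. finite T \<and> 4 \<le> card T \<and> (\<forall>(j,z)\<in>T. 0 \<le> j \<and> 0 \<le> z \<and> (a+d)*z \<le> s0 + j*a \<and>
            b*s0 + a*(j*b - d*z) \<le> (2*a - d - 1)*b + (b*(a+d) - d*a) - a + a)"
    proof (cases "s0 < d")
      case True
      have m2: "b * s0 \<le> b * (d - 1)" using s0 True assms by (intro mult_left_mono) auto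
      show ?thesis
      proof (rule wit4I')
  show "card {(0,0),(1,0),(2,1),(2::int,0::int)} = 4" by simp
  show "okw a b (a+d) d ((2*a - d - 1)*b + (b*(a+d) - d*a) - a) s0 (0,0)" by (rule okwI) (use s0 m m2 pos ab K1 K2 K3 K4 da d1 in \<open>((simp only: algebra_simps)?; linarith)\<close>)+
  show "okw a b (a+d) d ((2*a - d - 1)*b + (b*(a+d) - d*a) - a) s0 (1,0)" by (rule okwI) (use s0 m m2 pos ab K1 K2 K3 K4 da d1 in \<open>((simp only: algebra_simps)?; linarith)\<close>)+
  show "okw a b (a+d) d ((2*a - d - 1)*b + (b*(a+d) - d*a) - a) s0 (2,1)" by (rule okwI) (use s0 m m2 pos ab K1 K2 K3 K4 da d1 in \<open>((simp only: algebra_simps)?; linarith)\<close>)+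
  show "okw a b (a+d) d ((2*a - d - 1)*b + (b*(a+d) - d*a) - a) s0 (2,0)" by (rule okwI) (use s0 m m2 pos ab K1 K2 K3 K4 da d1 in \<open>((simp only: algebra_simps)?; linarith)\<close>)+
qed
    next
      case False
      show ?thesis
      proof (rule wit4I')
  show "card {(0,0),(1,1),(1,0),(2::int,1::int)} = 4" by simp
  show "okw a b (a+d) d ((2*a - d - 1)*b + (b*(a+d) - d*a) - a) s0 (0,0)" by (rule okwI) (use s0 m False pos ab K1 K2 K3 K4 da d1 in \<open>((simp only: algebra_simps)?; linarith)\<close>)+
  show "okw a b (a+d) d ((2*a - d - 1)*b + (b*(a+d) - d*a) - a) s0 (1,1)" by (rule okwI) (use s0 m False pos ab K1 K2 K3 K4 da d1 in \<open>((simp only: algebra_simps)?; linarith)\<close>)+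
  show "okw a b (a+d) d ((2*a - d - 1)*b + (b*(a+d) - d*a) - a) s0 (1,0)" by (rule okwI) (use s0 m False pos ab K1 K2 K3 K4 da d1 in \<open>((simp only: algebra_simps)?; linarith)\<close>)+
  show "okw a b (a+d) d ((2*a - d - 1)*b + (b*(a+d) - d*a) - a) s0 (2,1)" by (rule okwI) (use s0 m False pos ab K1 K2 K3 K4 da d1 in \<open>((simp only: algebra_simps)?; linarith)\<close>)+
qed
    qed
  qed
  show "cnt_ok a b (a+d) d ((2*a - d - 1)*b + (b*(a+d) - d*a) - a) (a - 1)"
  proof (rule cnt3I[where u="(0,0)" and v="(1,0)" and w="(1,1)"])
    show "a dvd (2*a - d - 1)*b + (b*(a+d) - d*a) - a - b * (a - 1)"
      by (rule dvdI[of _ _ "2 * b - d - 1"]) (simp add: algebra_simps)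
  next
    fix j z assume hj: "0 \<le> j" and hz: "0 \<le> z" and h1: "(a+d)*z \<le> (a - 1) + j*a"
      and h2: "b*(a-1) + a*(j*b - d*z) \<le> (2*a - d - 1)*b + (b*(a+d) - d*a) - a"
    have "a*(j*b - d*z) \<le> a*(2*b - d - 1)" using h2 by (simp only: algebra_simps; linarith)
    then have v: "j*b - d*z \<le> 2*b - d - 1" using a2 by simp
    then have dz: "d*z \<ge> (j-2)*b + d + 1" by (simp add: left_diff_distrib)
    have zlow: "(a+d)*z \<ge> (a+d)*2" if "z \<ge> 2" using that a2 d1 by (intro mult_left_mono) auto
    have zlow1: "(a+d)*z \<ge> (a+d)*1" if "z \<ge> 1" using that a2 d1 by (intro mult_left_mono) auto
    show "(j,z) \<in> {(0,0),(1,0),(1,1)}"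
    proof (cases "j \<le> 1")
      case True
      then have "j = 0 \<or> j = 1" using hj by auto
      then show ?thesis
      proof
        assume j0: "j = 0"
        have "z = 0"
        proof (rule ccontr)
          assume "z \<noteq> 0" then have "z \<ge> 1" using hz by simp
          then show False using zlow1 h1 j0 d1 by simp
        qed
        then show ?thesis using j0 by simp
      next
        assume j1: "j = 1"
        have "z \<le> 1"
        proof (rule ccontr)
          assume "\<not> z \<le> 1" then have "z \<ge> 2" by simp
          then show False using zlow h1 j1 d1 by simp
        qed
        then show ?thesis using j1 hz by auto
      qed
    next
      case False
      show ?thesis
      proof (cases "j = 2")
        case True
        have "d*z \<ge> d + 1" using dz True by simp
        have "z \<ge> 2"
        proof (rule ccontr)
          assume "\<not> z \<ge> 2"
          then have "d*z \<le> d*1" using d1 by (intro mult_left_mono) auto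
          then show False using \<open>d*z \<ge> d + 1\<close> by simp
        qed
        then have False using zlow h1 True ad by simp
        then show ?thesis by simp
      next
        case j2: False
        then have j3: "j - 2 \<ge> 1" using False by simp
        define X where "X = (j-2)*((a+d)*b - d*a)"
        have e1: "(a+d)*(d*z) \<ge> (a+d)*((j-2)*b + d + 1)" using dz assms by (intro mult_left_mono) auto
        have e2: "d*((a+d)*z) \<le> d*((a - 1) + j*a)" using h1 assms by (intro mult_left_mono) auto
        have e4: "X + (a+d)*(d+1) \<le> 3*(a*d) - d"
          unfolding X_def using e1 e2 by (simp only: algebra_simps; linarith)
        have cp: "(a+d)*b - d*a \<ge> 0" using pos ab K1 K2 by (simp add: algebra_simps)
        have e3: "X \<ge> 1*((a+d)*b - d*a)" unfolding X_def using j3 cp by (intro mult_right_mono) auto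
        have e5: "X \<ge> a*b + b*d - a*d" using e3 by (simp add: algebra_simps)
        have e6: "(a+d)*(d+1) = a*d + d*d + a + d" by (simp add: algebra_simps)
        have False using e4 e5 e6 ab K1 pos a2 d1 by linarith
        then show ?thesis by simp
      qed
    qed
  qed (use assms in auto)
qed

lemma part_c:
  assumes "i \<ge> 3"
  shows "p_frobenius 3 [fib i, fib (i+2), fib (2*i+1)] = (F i + F (i-2) - 1) * F (i+2) + F (2*i+1) - F i"
proof -
  note fb = fib_base[OF assms(1)]
  have e: "2*i+1 = i + (i+1)" by simp
  have c: "F (i + (i+1)) = F (i+2) * F (i+1) - F (i-1) * F i" using fib_shift_int[of "i+1" i] assms by simp
  have q: "F (i+1-2) = F (i-1)" by (simp add: Suc_diff_Suc numeral_2_eq_2)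
  have p: "F (i+1) = F i + F (i-1)" using fb by simp
  have g: "(F i + F (i-2) - 1) * F (i+2) = (2*F i - F (i-1) - 1) * F (i+2)" using fb by simp
  have k3: "i+1 \<ge> 3" using assms by simp
  have ar: "wit_ok (F i) (F (i+2)) (F (i+1)) (F (i+1-2)) ((2*F i - F (i-1) - 1)*F(i+2) + (F(i+2)*(F i + F (i-1)) - F (i-1)*F i) - F i)"
     "cnt_ok (F i) (F (i+2)) (F (i+1)) (F (i+1-2)) ((2*F i - F (i-1) - 1)*F(i+2) + (F(i+2)*(F i + F (i-1)) - F (i-1)*F i) - F i) (F i - 1)"
    unfolding q p by (rule arith_c; use fb in linarith)+
  show ?thesis unfolding e c g p by (rule frob_fib[OF assms(1) k3 ar])
qed



lemma arith_d:
  fixes a b e :: int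
  assumes a2: "a \<ge> 2" and b2: "b > 2*a" and e1: "1 \<le> e" and ea: "e < a"
  shows "wit_ok a b a e ((a-1)*b + 2*(b*a - e*a) - a)"
        "cnt_ok a b a e ((a-1)*b + 2*(b*a - e*a) - a) (a - 1)"
proof -
  have pos: "a*e > 0" "a*a > 0" "a*b > 0" using e1 a2 b2 by simp_all
  have K1: "a*e \<le> a*a" using ea a2 by (intro mult_left_mono) auto
  have K2: "2*(a*a) \<le> a*b" using mult_left_mono[of "2*a" b a] b2 a2 by (simp add: algebra_simps)
  show "wit_ok a b a e ((a-1)*b + 2*(b*a - e*a) - a)" unfolding wit_ok_def
  proof (intro allI impI)
    fix s0 assume s0: "0 \<le> s0" "s0 < a"
    have m: "b * s0 \<le> b * (a - 1)" using s0 assms by (intro mult_left_mono) auto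
    show "\<exists>T. finite T \<and> 4 \<le> card T \<and> (\<forall>(j,z)\<in>T. 0 \<le> j \<and> 0 \<le> z \<and> a*z \<le> s0 + j*a \<and>
            b*s0 + a*(j*b - e*z) \<le> (a-1)*b + 2*(b*a - e*a) - a + a)"
      proof (rule wit4I')
  show "card {(0,0),(1,1),(1,0),(2::int,2::int)} = 4" by simp
  show "okw a b a e ((a-1)*b + 2*(b*a - e*a) - a) s0 (0,0)" by (rule okwI) (use s0 m pos K1 K2 a2 in \<open>((simp only: algebra_simps)?; linarith)\<close>)+
  show "okw a b a e ((a-1)*b + 2*(b*a - e*a) - a) s0 (1,1)" by (rule okwI) (use s0 m pos K1 K2 a2 in \<open>((simp only: algebra_simps)?; linarith)\<close>)+
  show "okw a b a e ((a-1)*b + 2*(b*a - e*a) - a) s0 (1,0)" by (rule okwI) (use s0 m pos K1 K2 a2 in \<open>((simp only: algebra_simps)?; linarith)\<close>)+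
  show "okw a b a e ((a-1)*b + 2*(b*a - e*a) - a) s0 (2,2)" by (rule okwI) (use s0 m pos K1 K2 a2 in \<open>((simp only: algebra_simps)?; linarith)\<close>)+
qed
  qed
  show "cnt_ok a b a e ((a-1)*b + 2*(b*a - e*a) - a) (a - 1)"
  proof (rule cnt3I[where u="(0,0)" and v="(1,0)" and w="(1,1)"])
    show "a dvd (a-1)*b + 2*(b*a - e*a) - a - b * (a - 1)"
      by (rule dvdI[of _ _ "2 * b - 2*e - 1"]) (simp add: algebra_simps)
  next
    fix j z assume hj: "0 \<le> j" and hz: "0 \<le> z" and h1: "a*z \<le> (a - 1) + j*a"
      and h2: "b*(a-1) + a*(j*b - e*z) \<le> (a-1)*b + 2*(b*a - e*a) - a"
    have "a*(j*b - e*z) \<le> a*(2*b - 2*e - 1)" using h2 by (simp only: algebra_simps; linarith)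
    then have v: "j*b - e*z \<le> 2*b - 2*e - 1" using a2 by simp
    then have ez: "e*z \<ge> (j-2)*b + 2*e + 1" by (simp add: left_diff_distrib)
    have zj: "z \<le> j"
    proof (rule ccontr)
      assume "\<not> z \<le> j"
      then have "a*z \<ge> a*(j+1)" using a2 by (intro mult_left_mono) auto
      then show False using h1 by (simp add: algebra_simps)
    qed
    show "(j,z) \<in> {(0,0),(1,0),(1,1)}"
    proof (cases "j \<le> 1")
      case True
      then show ?thesis using hj hz zj by (cases "j = 0") auto
    next
      case False
      have ezj: "e*z \<le> e*j" using zj e1 by (intro mult_left_mono) auto
      show ?thesis
      proof (cases "j = 2")
        case True
        have "e*z \<ge> 2*e + 1" using ez True by simp
        moreover have "e*j = 2*e" using True by simp
        ultimately have False using ezj by linarith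
        then show ?thesis by simp
      next
        case j2: False
        then have j3: "j - 2 \<ge> 1" using False by simp
        have "(j-2)*b \<ge> (j-2)*e" using j3 b2 ea a2 by (intro mult_left_mono) auto
        then have False using ez ezj by (simp add: algebra_simps)
        then show ?thesis by simp
      qed
    qed
  qed (use assms in auto)
qed

lemma part_d:
  assumes "i \<ge> 3"
  shows "p_frobenius 3 [fib i, fib (i+2), fib (2*i)] = (F i - 1) * F (i+2) + 2 * F (2*i) - F i"
proof -
  note fb = fib_base[OF assms(1)]
  have e: "2*i = i + i" by simp
  have c: "F (i + i) = F (i+2) * F i - F (i-2) * F i" using fib_shift_int[of i i] assms by simp
  have ar: "wit_ok (F i) (F (i+2)) (F i) (F (i-2)) ((F i - 1)*F(i+2) + 2*(F(i+2)*F i - F (i-2)*F i) - F i)"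
     "cnt_ok (F i) (F (i+2)) (F i) (F (i-2)) ((F i - 1)*F(i+2) + 2*(F(i+2)*F i - F (i-2)*F i) - F i) (F i - 1)"
    by (rule arith_d; use fb in linarith)+
  show ?thesis unfolding e c by (rule frob_fib[OF assms(1) assms(1) ar])
qed



lemma arith_e:
  fixes a b d e h :: int
  assumes ade: "a = d + e" and deh: "d = e + h" and bd: "b = 2*a + d" and h1: "1 \<le> h" and he: "h \<le> e"
  shows "wit_ok a b d h ((e-1)*b + 3*(b*d - h*a) - a)"
        "cnt_ok a b d h ((e-1)*b + 3*(b*d - h*a) - a) (h - 1)"
proof -
  have a2: "a \<ge> 2" using assms by simp
  have pos: "a*h > 0" "a*a > 0" "a*b > 0" "b*d > 0" "d*h > 0" "b*h > 0" using assms by simp_all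
  have K1: "3*(a*h) \<le> b*d"
  proof -
    have "0 \<le> (3*a - d)*(a - d)" using assms by simp
    then show ?thesis using assms by (simp add: algebra_simps)
  qed
  have K2: "h*h \<le> d*h" using assms by (intro mult_right_mono) auto
  have K3: "2*(a*h) + d*h = b*h" using bd by (simp add: algebra_simps)
  have K5: "2*(a*h) \<le> a*b" "3*(a*h) \<le> a*b" using pos assms by (simp_all add: algebra_simps)
  show "wit_ok a b d h ((e-1)*b + 3*(b*d - h*a) - a)" unfolding wit_ok_def
  proof (intro allI impI)
    fix s0 assume s0: "0 \<le> s0" "s0 < a"
    have m: "b * s0 \<le> b * (a - 1)" using s0 assms by (intro mult_left_mono) auto
    have eb: "(e-1)*b + 3*(b*d - h*a) - a + a = b*(a + 2*d - 1) - 3*(a*h)" using assms by (simp add: algebra_simps)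
    show "\<exists>T. finite T \<and> 4 \<le> card T \<and> (\<forall>(j,z)\<in>T. 0 \<le> j \<and> 0 \<le> z \<and> d*z \<le> s0 + j*a \<and>
            b*s0 + a*(j*b - h*z) \<le> (e-1)*b + 3*(b*d - h*a) - a + a)"
    proof (cases "s0 < h")
      case True
      have m2: "b * s0 \<le> b * (h - 1)" using s0 True assms by (intro mult_left_mono) auto
      have ee: "b*(a + 2*d - 1) - 3*(a*h) = b*(h - 1) + 2*(a*b) - 3*(a*h)" using assms by (simp add: algebra_simps)
      show ?thesis
      proof (rule wit4I')
  show "card {(0,0),(1,1),(1,0),(2::int,3::int)} = 4" by simp
  show "okw a b d h ((e-1)*b + 3*(b*d - h*a) - a) s0 (0,0)" by (rule okwI) (use s0 m2 eb ee pos K5 ade deh he h1 in \<open>((simp only: algebra_simps)?; linarith)\<close>)+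
  show "okw a b d h ((e-1)*b + 3*(b*d - h*a) - a) s0 (1,1)" by (rule okwI) (use s0 m2 eb ee pos K5 ade deh he h1 in \<open>((simp only: algebra_simps)?; linarith)\<close>)+
  show "okw a b d h ((e-1)*b + 3*(b*d - h*a) - a) s0 (1,0)" by (rule okwI) (use s0 m2 eb ee pos K5 ade deh he h1 in \<open>((simp only: algebra_simps)?; linarith)\<close>)+
  show "okw a b d h ((e-1)*b + 3*(b*d - h*a) - a) s0 (2,3)" by (rule okwI) (use s0 m2 eb ee pos K5 ade deh he h1 in \<open>((simp only: algebra_simps)?; linarith)\<close>)+
qed
    next
      case False
      show ?thesis
      proof (cases "s0 < d")
        case True
        have m3: "b * s0 \<le> b * (d - 1)" using s0 True assms by (intro mult_left_mono) auto
        have ee: "b*(a + 2*d - 1) - 3*(a*h) = b*(d - 1) + a*b + (b*d - 3*(a*h))" using assms by (simp add: algebra_simps)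
        show ?thesis
        proof (rule wit4I')
  show "card {(0,0),(1,2),(1,1),(1::int,0::int)} = 4" by simp
  show "okw a b d h ((e-1)*b + 3*(b*d - h*a) - a) s0 (0,0)" by (rule okwI) (use s0 m3 eb ee pos K1 False ade deh in \<open>((simp only: algebra_simps)?; linarith)\<close>)+
  show "okw a b d h ((e-1)*b + 3*(b*d - h*a) - a) s0 (1,2)" by (rule okwI) (use s0 m3 eb ee pos K1 False ade deh in \<open>((simp only: algebra_simps)?; linarith)\<close>)+
  show "okw a b d h ((e-1)*b + 3*(b*d - h*a) - a) s0 (1,1)" by (rule okwI) (use s0 m3 eb ee pos K1 False ade deh in \<open>((simp only: algebra_simps)?; linarith)\<close>)+
  show "okw a b d h ((e-1)*b + 3*(b*d - h*a) - a) s0 (1,0)" by (rule okwI) (use s0 m3 eb ee pos K1 False ade deh in \<open>((simp only: algebra_simps)?; linarith)\<close>)+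
qed
      next
        case False
        have ee: "b*(a + 2*d - 1) - 3*(a*h) = b*(a - 1) + a*b + d*h - a*h" using assms by (simp add: algebra_simps)
        show ?thesis
        proof (rule wit4I')
  show "card {(0,1),(0,0),(1,2),(1::int,1::int)} = 4" by simp
  show "okw a b d h ((e-1)*b + 3*(b*d - h*a) - a) s0 (0,1)" by (rule okwI) (use s0 m eb ee pos K1 False ade deh in \<open>((simp only: algebra_simps)?; linarith)\<close>)+
  show "okw a b d h ((e-1)*b + 3*(b*d - h*a) - a) s0 (0,0)" by (rule okwI) (use s0 m eb ee pos K1 False ade deh in \<open>((simp only: algebra_simps)?; linarith)\<close>)+
  show "okw a b d h ((e-1)*b + 3*(b*d - h*a) - a) s0 (1,2)" by (rule okwI) (use s0 m eb ee pos K1 False ade deh in \<open>((simp only: algebra_simps)?; linarith)\<close>)+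
  show "okw a b d h ((e-1)*b + 3*(b*d - h*a) - a) s0 (1,1)" by (rule okwI) (use s0 m eb ee pos K1 False ade deh in \<open>((simp only: algebra_simps)?; linarith)\<close>)+
qed
      qed
    qed
  qed
  show "cnt_ok a b d h ((e-1)*b + 3*(b*d - h*a) - a) (h - 1)"
  proof (rule cnt3I[where u="(0,0)" and v="(1,0)" and w="(1,1)"])
    show "a dvd (e-1)*b + 3*(b*d - h*a) - a - b * (h - 1)"
      by (rule dvdI[of _ _ "2 * b - 3*h - 1"]) (use assms in \<open>simp add: algebra_simps\<close>)
  next
    fix j z assume hj: "0 \<le> j" and hz: "0 \<le> z" and h1': "d*z \<le> (h - 1) + j*a"
      and h2: "b*(h-1) + a*(j*b - h*z) \<le> (e-1)*b + 3*(b*d - h*a) - a"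
    have "(e-1)*b + 3*(b*d - h*a) - a - b*(h-1) = a*(2*b - 3*h - 1)" using assms by (simp add: algebra_simps)
    then have "a*(j*b - h*z) \<le> a*(2*b - 3*h - 1)" using h2 by linarith
    then have v: "j*b - h*z \<le> 2*b - 3*h - 1" using a2 by simp
    then have hzj: "h*z \<ge> (j-2)*b + 3*h + 1" by (simp add: left_diff_distrib)
    have zl: "d*z \<ge> d*c" if "z \<ge> c" for c using that assms by (intro mult_left_mono) auto
    show "(j,z) \<in> {(0,0),(1,0),(1,1)}"
    proof (cases "j \<le> 1")
      case True
      then have "j = 0 \<or> j = 1" using hj by auto
      then show ?thesis
      proof
        assume j0: "j = 0"
        have "z = 0"
        proof (rule ccontr)
          assume "z \<noteq> 0" then have "z \<ge> 1" using hz by simp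
          moreover have "d*z \<ge> d*1" using zl[of 1] \<open>z \<ge> 1\<close> by blast
          moreover have "j*a = 0" using j0 by simp
          ultimately show False using h1' deh he h1 by linarith
        qed
        then show ?thesis using j0 by simp
      next
        assume j1: "j = 1"
        have "z \<le> 1"
        proof (rule ccontr)
          assume "\<not> z \<le> 1" then have "z \<ge> 2" by simp
          moreover have "d*z \<ge> d*2" using zl[of 2] \<open>z \<ge> 2\<close> by blast
          moreover have "j*a = a" using j1 by simp
          ultimately show False using h1' ade deh he by linarith
        qed
        then show ?thesis using j1 hz by auto
      qed
    next
      case False
      show ?thesis
      proof (cases "j = 2")
        case True
        have "h*z \<ge> 3*h + 1" using hzj True by simp
        have "z \<ge> 4"
        proof (rule ccontr)
          assume "\<not> z \<ge> 4"
          then have "h*z \<le> h*3" using h1 by (intro mult_left_mono) auto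
          then show False using \<open>h*z \<ge> 3*h + 1\<close> by simp
        qed
        then have "d*z \<ge> d*4" using zl[of 4] by blast
        moreover have "j*a = 2*a" using True by simp
        ultimately have False using h1' ade deh he h1 by linarith
        then show ?thesis by simp
      next
        case j2: False
        then have j3: "j - 2 \<ge> 1" using False by simp
        define X where "X = (j-2)*(b*d - a*h)"
        have e1: "d*(h*z) \<ge> d*((j-2)*b + 3*h + 1)" using hzj assms by (intro mult_left_mono) auto
        have e2: "h*(d*z) \<le> h*((h - 1) + j*a)" using h1' assms by (intro mult_left_mono) auto
        have e4: "X + 3*(d*h) + d \<le> h*h - h + 2*(a*h)"
          unfolding X_def using e1 e2 by (simp only: algebra_simps; linarith)
        have cp: "b*d - a*h \<ge> 0" using K1 pos by simp
        have e3: "X \<ge> 1*(b*d - a*h)" unfolding X_def using j3 cp by (intro mult_right_mono) auto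
        have hh: "h*h > 0" using h1 by simp
        have e3': "X \<ge> b*d - a*h" using e3 by simp
        have False using e3' e4 K1 K2 hh pos deh he h1 by linarith
        then show ?thesis by simp
      qed
    qed
  qed (use assms in auto)
qed

lemma part_e:
  assumes "i \<ge> 4"
  shows "p_frobenius 3 [fib i, fib (i+2), fib (2*i-1)] = (F (i-2) - 1) * F (i+2) + 3 * F (2*i-1) - F i"
proof -
  have i3: "i \<ge> 3" using assms by simp
  note fb = fib_base[OF i3]
  have e: "2*i-1 = i + (i-1)" using assms by simp
  have c: "F (i + (i-1)) = F (i+2) * F (i-1) - F (i-3) * F i"
    using fib_shift_int[of "i-1" i] assms by (simp add: numeral_3_eq_3 numeral_2_eq_2)
  have q: "F (i-1-2) = F (i-3)" by (simp add: numeral_3_eq_3 numeral_2_eq_2)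
  have k3: "i-1 \<ge> 3" using assms by simp
  have h1: "F (i-3) \<ge> 1"
  proof -
    have "i - 3 > 0" using assms by simp
    then show ?thesis using fib_neq_0_nat[of "i-3"] by simp
  qed
  have ar: "wit_ok (F i) (F (i+2)) (F (i-1)) (F (i-1-2)) ((F (i-2) - 1)*F(i+2) + 3*(F(i+2)*F (i-1) - F (i-3)*F i) - F i)"
     "cnt_ok (F i) (F (i+2)) (F (i-1)) (F (i-1-2)) ((F (i-2) - 1)*F(i+2) + 3*(F(i+2)*F (i-1) - F (i-3)*F i) - F i) (F (i-3) - 1)"
    unfolding q by (rule arith_e; use fb h1 in linarith)+
  show ?thesis unfolding e c by (rule frob_fib[OF i3 k3 ar])
qed



lemma arith_f:
  fixes a b d e h u l :: int
  assumes ade: "a = d + e" and deh: "d = e + h" and ehu: "e = h + u" and hul: "h = u + l"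
    and bd: "b = 2*a + d" and l1: "1 \<le> l" and lu: "l \<le> u" and ul: "u \<le> 2*l"
  shows "wit_ok a b e u ((l-1)*b + 5*(b*e - u*a) - a)"
        "cnt_ok a b e u ((l-1)*b + 5*(b*e - u*a) - a) (a - 1)"
proof -
  have a2: "a \<ge> 2" using assms by simp
  have ex: "a = 5*u + 3*l" "b = 13*u + 8*l" "d = 3*u + 2*l" "e = 2*u + l" "h = u + l" using assms by simp_all
  have nn: "h \<ge> 1" "u \<ge> 1" "e \<ge> 1" "d \<ge> 1" using ex l1 lu by simp_all
  have uu: "u*u \<le> 2*(u*l)" using ul lu l1 by (simp add: mult_left_mono)
  have pos: "u*l > 0" "l*l > 0" "u*u > 0" "b*e > 0" "b*d > 0" "a*u > 0" using l1 lu ex by simp_all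
  have Q1: "b*d - a*b = - (b*e)" and Q1': "a*b = b*d + b*e" using ade by (simp_all add: algebra_simps)
  have P1: "b*d - 5*(a*u) = 14*(u*u) + 35*(u*l) + 16*(l*l)" using ex by (simp add: algebra_simps)
  have P2: "b*h - 3*(a*u) = 12*(u*l) + 8*(l*l) - 2*(u*u)" using ex by (simp add: algebra_simps)
  have P3: "b*l - a*u = 10*(u*l) + 8*(l*l) - 5*(u*u)" using ex by (simp add: algebra_simps)
  have P4: "b*e - 3*(a*u) = 11*(u*u) + 20*(u*l) + 8*(l*l)" using ex by (simp add: algebra_simps)
  have P5: "a*b - 5*(a*u) = a*(b - 5*u)" by (simp add: algebra_simps)
  have P6: "a*(b - 5*u) > 0" using ex l1 lu by simp
  have Mx: "(l-1)*b + 5*(b*e - u*a) - a + a = 2*(a*b) - b - 5*(a*u)" using assms by (simp add: algebra_simps)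
  have B1: "b*d \<ge> 5*(a*u)" using P1 pos by linarith
  have B2: "b*h \<ge> 3*(a*u)" using P2 pos uu by linarith
  have B3: "b*l \<ge> a*u" using P3 pos uu by linarith
  have B4: "b*e \<ge> 3*(a*u)" using P4 pos by linarith
  have R1: "a*b = b*e + b*d" "a*b - 2*(b*e) = b*h" "a*b - 3*(b*e) + b*h = b*l"
    using ade deh ehu hul by (simp_all add: algebra_simps)
  show "wit_ok a b e u ((l-1)*b + 5*(b*e - u*a) - a)" unfolding wit_ok_def
  proof (intro allI impI)
    fix s0 assume s0: "0 \<le> s0" "s0 < a"
    have m: "b * s0 \<le> b * (a - 1)" using s0 assms by (intro mult_left_mono) auto
    show "\<exists>T. finite T \<and> 4 \<le> card T \<and> (\<forall>(j,z)\<in>T. 0 \<le> j \<and> 0 \<le> z \<and> e*z \<le> s0 + j*a \<and>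
            b*s0 + a*(j*b - u*z) \<le> (l-1)*b + 5*(b*e - u*a) - a + a)"
    proof (cases "s0 < e")
      case True
      have m2: "b * s0 \<le> b * (e - 1)" using s0 True assms by (intro mult_left_mono) auto
      show ?thesis
      proof (rule wit4I')
  show "card {(0,0),(1,2),(1,1),(1::int,0::int)} = 4" by simp
  show "okw a b e u ((l-1)*b + 5*(b*e - u*a) - a) s0 (0,0)" by (rule okwI) (use s0 m2 Mx B1 R1 pos P6 P5 nn ade deh ehu in \<open>((simp only: algebra_simps)?; linarith)\<close>)+
  show "okw a b e u ((l-1)*b + 5*(b*e - u*a) - a) s0 (1,2)" by (rule okwI) (use s0 m2 Mx B1 R1 pos P6 P5 nn ade deh ehu in \<open>((simp only: algebra_simps)?; linarith)\<close>)+
  show "okw a b e u ((l-1)*b + 5*(b*e - u*a) - a) s0 (1,1)" by (rule okwI) (use s0 m2 Mx B1 R1 pos P6 P5 nn ade deh ehu in \<open>((simp only: algebra_simps)?; linarith)\<close>)+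
  show "okw a b e u ((l-1)*b + 5*(b*e - u*a) - a) s0 (1,0)" by (rule okwI) (use s0 m2 Mx B1 R1 pos P6 P5 nn ade deh ehu in \<open>((simp only: algebra_simps)?; linarith)\<close>)+
qed
    next
      case c1: False
      show ?thesis
      proof (cases "s0 < 2*e")
        case True
        have m2: "b * s0 \<le> b * (2*e - 1)" using s0 True assms by (intro mult_left_mono) auto
        show ?thesis
        proof (rule wit4I')
  show "card {(0,1),(0,0),(1,3),(1::int,2::int)} = 4" by simp
  show "okw a b e u ((l-1)*b + 5*(b*e - u*a) - a) s0 (0,1)" by (rule okwI) (use s0 c1 m2 Mx B1 B2 R1 pos P6 P5 nn ade deh ehu in \<open>((simp only: algebra_simps)?; linarith)\<close>)+
  show "okw a b e u ((l-1)*b + 5*(b*e - u*a) - a) s0 (0,0)" by (rule okwI) (use s0 c1 m2 Mx B1 B2 R1 pos P6 P5 nn ade deh ehu in \<open>((simp only: algebra_simps)?; linarith)\<close>)+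
  show "okw a b e u ((l-1)*b + 5*(b*e - u*a) - a) s0 (1,3)" by (rule okwI) (use s0 c1 m2 Mx B1 B2 R1 pos P6 P5 nn ade deh ehu in \<open>((simp only: algebra_simps)?; linarith)\<close>)+
  show "okw a b e u ((l-1)*b + 5*(b*e - u*a) - a) s0 (1,2)" by (rule okwI) (use s0 c1 m2 Mx B1 B2 R1 pos P6 P5 nn ade deh ehu in \<open>((simp only: algebra_simps)?; linarith)\<close>)+
qed
      next
        case c2: False
        show ?thesis
        proof (cases "s0 < 3*e - h")
          case True
          have m2: "b * s0 \<le> b * (3*e - h - 1)" using s0 True assms by (intro mult_left_mono) auto
          show ?thesis
          proof (rule wit4I')
  show "card {(0,2),(0,1),(0,0),(1::int,4::int)} = 4" by simp
  show "okw a b e u ((l-1)*b + 5*(b*e - u*a) - a) s0 (0,2)" by (rule okwI) (use s0 c2 m m2 Mx B3 R1 pos P6 P5 nn ade deh ehu in \<open>((simp only: algebra_simps)?; linarith)\<close>)+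
  show "okw a b e u ((l-1)*b + 5*(b*e - u*a) - a) s0 (0,1)" by (rule okwI) (use s0 c2 m m2 Mx B3 R1 pos P6 P5 nn ade deh ehu in \<open>((simp only: algebra_simps)?; linarith)\<close>)+
  show "okw a b e u ((l-1)*b + 5*(b*e - u*a) - a) s0 (0,0)" by (rule okwI) (use s0 c2 m m2 Mx B3 R1 pos P6 P5 nn ade deh ehu in \<open>((simp only: algebra_simps)?; linarith)\<close>)+
  show "okw a b e u ((l-1)*b + 5*(b*e - u*a) - a) s0 (1,4)" by (rule okwI) (use s0 c2 m m2 Mx B3 R1 pos P6 P5 nn ade deh ehu in \<open>((simp only: algebra_simps)?; linarith)\<close>)+
qed
        next
          case c3: False
          show ?thesis
          proof (rule wit4I')
  show "card {(0,2),(0,1),(0,0),(1::int,5::int)} = 4" by simp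
  show "okw a b e u ((l-1)*b + 5*(b*e - u*a) - a) s0 (0,2)" by (rule okwI) (use s0 c2 c3 m Mx R1 pos P6 P5 nn ade deh ehu in \<open>((simp only: algebra_simps)?; linarith)\<close>)+
  show "okw a b e u ((l-1)*b + 5*(b*e - u*a) - a) s0 (0,1)" by (rule okwI) (use s0 c2 c3 m Mx R1 pos P6 P5 nn ade deh ehu in \<open>((simp only: algebra_simps)?; linarith)\<close>)+
  show "okw a b e u ((l-1)*b + 5*(b*e - u*a) - a) s0 (0,0)" by (rule okwI) (use s0 c2 c3 m Mx R1 pos P6 P5 nn ade deh ehu in \<open>((simp only: algebra_simps)?; linarith)\<close>)+
  show "okw a b e u ((l-1)*b + 5*(b*e - u*a) - a) s0 (1,5)" by (rule okwI) (use s0 c2 c3 m Mx R1 pos P6 P5 nn ade deh ehu in \<open>((simp only: algebra_simps)?; linarith)\<close>)+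
qed
        qed
      qed
    qed
  qed
  show "cnt_ok a b e u ((l-1)*b + 5*(b*e - u*a) - a) (a - 1)"
  proof (rule cnt3I[where u="(0,0)" and v="(0,1)" and w="(0,2)"])
    show "a dvd (l-1)*b + 5*(b*e - u*a) - a - b * (a - 1)"
      by (rule dvdI[of _ _ "b - 5*u - 1"]) (use ex in \<open>simp add: algebra_simps\<close>)
  next
    fix j z assume hj: "0 \<le> j" and hz: "0 \<le> z" and h1': "e*z \<le> (a - 1) + j*a"
      and h2: "b*(a-1) + a*(j*b - u*z) \<le> (l-1)*b + 5*(b*e - u*a) - a"
    have "(l-1)*b + 5*(b*e - u*a) - a - b*(a-1) = a*(b - 5*u - 1)" using ex by (simp add: algebra_simps)
    then have "a*(j*b - u*z) \<le> a*(b - 5*u - 1)" using h2 by linarith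
    then have v: "j*b - u*z \<le> b - 5*u - 1" using a2 by simp
    then have uz: "u*z \<ge> (j-1)*b + 5*u + 1" by (simp add: left_diff_distrib)
    have zl: "e*z \<ge> e*c" if "z \<ge> c" for c using that ex l1 lu by (intro mult_left_mono) auto
    show "(j,z) \<in> {(0,0),(0,1),(0,2)}"
    proof (cases "j = 0")
      case j0: True
      have "z \<le> 2"
      proof (rule ccontr)
        assume "\<not> z \<le> 2" then have "z \<ge> 3" by simp
        then have "e*z \<ge> e*3" using zl by blast
        moreover have "j*a = 0" using j0 by simp
        ultimately show False using h1' ex nn by linarith
      qed
      then show ?thesis using j0 hz by auto
    next
      case False
      show ?thesis
      proof (cases "j = 1")
        case True
        have "u*z \<ge> 5*u + 1" using uz True by simp
        have "z \<ge> 6"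
        proof (rule ccontr)
          assume "\<not> z \<ge> 6"
          then have "u*z \<le> u*5" using l1 lu by (intro mult_left_mono) auto
          then show False using \<open>u*z \<ge> 5*u + 1\<close> by simp
        qed
        then have "e*z \<ge> e*6" using zl by blast
        moreover have "j*a = a" using True by simp
        ultimately have False using h1' ex l1 nn by linarith
        then show ?thesis by simp
      next
        case j1: False
        then have j2: "j - 1 \<ge> 1" using False hj by simp
        define X where "X = (j-1)*(b*e - a*u)"
        have e1: "e*(u*z) \<ge> e*((j-1)*b + 5*u + 1)" using uz ex l1 lu by (intro mult_left_mono) auto
        have e2: "u*(e*z) \<le> u*((a - 1) + j*a)" using h1' l1 lu by (intro mult_left_mono) auto
        have e4: "X + 5*(e*u) + e \<le> 2*(a*u) - u"
          unfolding X_def using e1 e2 by (simp only: algebra_simps; linarith)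
        have cp: "b*e - a*u \<ge> 0" using B4 pos by simp
        have e3: "X \<ge> 1*(b*e - a*u)" unfolding X_def using j2 cp by (intro mult_right_mono) auto
        have e3': "X \<ge> b*e - a*u" using e3 by simp
        have eu: "e*u > 0" using ex l1 lu by simp
        have False using e3' e4 B4 eu ex l1 lu by linarith
        then show ?thesis by simp
      qed
    qed
  qed (use ex l1 lu in auto)
qed

lemma part_f:
  assumes "i \<ge> 6"
  shows "p_frobenius 3 [fib i, fib (i+2), fib (2*i-2)] = (F (i-5) - 1) * F (i+2) + 5 * F (2*i-2) - F i"
proof -
  have i3: "i \<ge> 3" using assms by simp
  note fb = fib_base[OF i3]
  obtain n where n: "i = n + 6" using assms by (intro that[of "i-6"]) simp
  have fr: "F (i-2) = F (i-3) + F (i-4)" "F (i-3) = F (i-4) + F (i-5)" "F (i-5) \<ge> 1"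
    "F (i-5) \<le> F (i-4)" "F (i-4) \<le> 2 * F (i-5)"
  proof -
    have a: "i-2 = Suc (Suc (n+2))" "i-3 = Suc (Suc (n+1))" "i-4 = Suc (Suc n)" "i-5 = Suc n" "i-6 = n" using n by simp_all
    show "F (i-2) = F (i-3) + F (i-4)" unfolding a by simp
    show "F (i-3) = F (i-4) + F (i-5)" unfolding a by simp
    show "F (i-5) \<ge> 1" unfolding a using fib_neq_0_nat[of "Suc n"] by simp
    show "F (i-5) \<le> F (i-4)" unfolding a using fib_Suc_mono[of "Suc n"] by simp
    show "F (i-4) \<le> 2 * F (i-5)" unfolding a using fib_Suc_mono[of "n"] by simp
  qed
  have e: "2*i-2 = i + (i-2)" using assms by simp
  have q0: "i-2-2 = i-4" by arith
  have q: "F (i-2-2) = F (i-4)" by (simp only: q0)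
  have c: "F (i + (i-2)) = F (i+2) * F (i-2) - F (i-4) * F i"
    unfolding q[symmetric] by (rule fib_shift_int) (use assms in simp)
  have k3: "i-2 \<ge> 3" using assms by simp
  have ar: "wit_ok (F i) (F (i+2)) (F (i-2)) (F (i-2-2)) ((F (i-5) - 1)*F(i+2) + 5*(F(i+2)*F (i-2) - F (i-4)*F i) - F i)"
     "cnt_ok (F i) (F (i+2)) (F (i-2)) (F (i-2-2)) ((F (i-5) - 1)*F(i+2) + 5*(F(i+2)*F (i-2) - F (i-4)*F i) - F i) (F i - 1)"
    unfolding q by (rule arith_f[where d="F (i-1)" and h="F (i-3)" and l="F (i-5)"]; use fb fr in linarith)+
  show ?thesis unfolding e c by (rule frob_fib[OF i3 k3 ar])
qed



lemma part_conc:
  "p_frobenius 3 [fib 5, fib 7, fib 8] = F 7 + 4 * F 8 - F 5" "F 7 + 4 * F 8 - F 5 = 92"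
proof -
  have f: "fib 5 = 5" "fib 7 = 13" "fib 8 = 21" "fib 3 = 2" "fib 1 = 1" by (simp_all add: numeral_eq_Suc)
  have g: "F 7 + 4 * F 8 - F 5 = 92" using f by simp
  have w: "wit_ok 5 13 2 1 92"
    unfolding wit_ok_def
  proof (intro allI impI)
    fix s0 :: int assume s0: "0 \<le> s0" "s0 < 5"
    then have "s0 = 0 \<or> s0 = 1 \<or> s0 = 2 \<or> s0 = 3 \<or> s0 = 4" by arith
    then show "\<exists>T. finite T \<and> 4 \<le> card T \<and> (\<forall>(j,z)\<in>T. 0 \<le> j \<and> 0 \<le> z \<and> 2*z \<le> s0 + j*5 \<and>
            13*s0 + 5*(j*13 - 1*z) \<le> 92 + 5)"
    proof (elim disjE)
      assume "s0 = 0" then show ?thesis by (intro exI[of _ "{(0,0),(1,2),(1,1),(1,0)}"]) auto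
    next
      assume "s0 = 1" then show ?thesis by (intro exI[of _ "{(0,0),(1,3),(1,2),(1,1)}"]) auto
    next
      assume "s0 = 2" then show ?thesis by (intro exI[of _ "{(0,1),(0,0),(1,3),(1,2)}"]) auto
    next
      assume "s0 = 3" then show ?thesis by (intro exI[of _ "{(0,1),(0,0),(1,4),(1,3)}"]) auto
    next
      assume "s0 = 4" then show ?thesis by (intro exI[of _ "{(0,2),(0,1),(0,0),(1,4)}"]) auto
    qed
  qed
  have c: "cnt_ok 5 13 2 1 92 4"
  proof (rule cnt3I[where u="(0,0)" and v="(0,1)" and w="(0,2)"])
    fix j z :: int assume "0 \<le> j" "0 \<le> z" "2*z \<le> 4 + j*5" "13*4 + 5*(j*13 - 1*z) \<le> 92"
    then have h: "2*z \<le> 4 + 5*j" "13*j - z \<le> 8" "0 \<le> j" "0 \<le> z" by (simp_all add: algebra_simps)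
    then have "21*j < 21" by linarith
    then have "j = 0" using h(3) by simp
    then have "j = 0" "z \<le> 2" using h(1) by simp_all
    then show "(j,z) \<in> {(0,0),(0,1),(0,2)}" using \<open>0 \<le> z\<close> by auto
  qed auto
  have f2: "F 5 = 5" "F (5+2) = 13" "F 3 = 2" "F (3-2) = 1" using f by simp_all
  have w': "wit_ok (F 5) (F (5+2)) (F 3) (F (3-2)) 92" unfolding f2 by (rule w)
  have c': "cnt_ok (F 5) (F (5+2)) (F 3) (F (3-2)) 92 4" unfolding f2 by (rule c)
  have "p_frobenius 3 [fib 5, fib (5+2), fib (5+3)] = 92"
    by (rule frob_fib[OF _ _ w' c']) simp_all
  then show "p_frobenius 3 [fib 5, fib 7, fib 8] = F 7 + 4 * F 8 - F 5" using g by simp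
  show "F 7 + 4 * F 8 - F 5 = 92" by (rule g)
qed



lemma arith_g_wit:
  fixes a b p q c r t G :: int
  assumes ar: "a = r*p + t" and t1: "1 \<le> t" and tp: "t \<le> p" and r3: "r \<ge> 3" and pq: "2*q \<le> p" and q1: "1 \<le> q"
    and ab5: "5*a \<le> 2*b" and cd: "c = b*p - q*a"
    and M1: "(p-1)*b + (r+2)*c \<le> G + a" and M2: "(t-1)*b + (r+3)*c \<le> G + a"
  shows "wit_ok a b p q G"
proof -
  have p2: "p \<ge> 2" using pq q1 by simp
  have "3*p \<le> r*p" using r3 p2 by (intro mult_right_mono) auto
  then have a3p: "a \<ge> 3*p + 1" using ar t1 by simp
  have b0: "b > 0" using ab5 a3p p2 by simp
  have B1: "5*(a*q) \<le> b*p"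
  proof -
    have "p*(5*a) \<le> p*(2*b)" using ab5 p2 by (intro mult_left_mono) auto
    moreover have "(2*q)*(5*a) \<le> p*(5*a)" using pq a3p p2 by (intro mult_right_mono) auto
    ultimately show ?thesis by (simp add: algebra_simps)
  qed
  have aq0: "a*q > 0" using a3p p2 q1 by simp
  have c0: "c \<ge> a*q" using B1 cd aq0 by (simp add: algebra_simps)
  have rc0: "r*c \<ge> 0" using c0 aq0 r3 by simp
  have tb0: "t*b \<ge> 0" using t1 b0 by simp
  have I1: "a*b = r*c + t*b + r*(a*q)"
  proof -
    have e1: "a*b = r*(b*p) + t*b" unfolding ar by (simp add: algebra_simps)
    have e2: "r*(b*p) = r*c + r*(a*q)" unfolding cd by (simp add: algebra_simps)
    show ?thesis using e1 e2 by linarith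
  qed
  have F1: "3*(a*q) \<le> r*c + t*b"
  proof -
    have "r*(2*q) \<le> r*p" using pq r3 by (intro mult_left_mono) auto
    then have "2*(r*q) + 6*q \<le> 2*(a - 1)" using ar t1 pq a3p by (simp add: algebra_simps)
    then have "r*q + 3*q \<le> a - 1" by simp
    then have "a*(r*q + 3*q) \<le> a*(a-1)" using a3p p2 by (intro mult_left_mono) auto
    moreover have "a*(a-1) \<le> a*b" using a3p p2 ab5 by (intro mult_left_mono) auto
    ultimately show ?thesis using I1 by (simp add: algebra_simps)
  qed
  have Mx1: "(p-1)*b + (r+2)*c = b*p - b + r*c + 2*c" by (simp add: algebra_simps)
  have Mx2: "(t-1)*b + (r+3)*c = t*b - b + r*c + 3*c" by (simp add: algebra_simps)
  have M2': "t*b - b + r*c + 3*c \<le> G + a" using M2 Mx2 by simp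
  have M1': "b*p - b + r*c + 2*c \<le> G + a" using M1 Mx1 by simp
  show ?thesis unfolding wit_ok_def
  proof (intro allI impI)
    fix s0 assume s0: "0 \<le> s0" "s0 < a"
    have V1: "b*s0 + a*(1*b - q*z) = b*s0 + r*c + t*b + (r - z)*(a*q)" for z
      using I1 by (simp add: algebra_simps)
    have V0: "b*s0 + a*(0*b - q*z) \<le> b*s0" if "z \<ge> 0" for z
    proof -
      have "0 \<le> (a*q)*z" using that aq0 by simp
      then show ?thesis by (simp add: algebra_simps)
    qed
    have Vm: "(r - z)*(a*q) \<le> w*(a*q)" if "r - z \<le> w" for z w using that aq0 by (intro mult_right_mono) auto
    show "\<exists>T. finite T \<and> 4 \<le> card T \<and> (\<forall>(j,z)\<in>T. 0 \<le> j \<and> 0 \<le> z \<and> p*z \<le> s0 + j*a \<and>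
            b*s0 + a*(j*b - q*z) \<le> G + a)"
    proof (cases "s0 < 3*p")
      case False
      define q0 where "q0 = s0 div p"
      define \<rho> where "\<rho> = s0 mod p"
      have sq: "s0 = q0*p + \<rho>" "0 \<le> \<rho>" "\<rho> < p" unfolding q0_def \<rho>_def using p2 by simp_all
      have q03: "q0 \<ge> 3"
      proof (rule ccontr)
        assume "\<not> q0 \<ge> 3"
        then have "q0*p \<le> 2*p" using p2 by (intro mult_right_mono) auto
        then show False using sq False by linarith
      qed
      have q0r: "q0 \<le> r"
      proof (rule ccontr)
        assume "\<not> q0 \<le> r"
        then have "(r+1)*p \<le> q0*p" using p2 by (intro mult_right_mono) auto
        moreover have "(r+1)*p = r*p + p" by (simp add: algebra_simps)
        ultimately show False using sq s0 ar tp by linarith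
      qed
      have pz: "p*(q0 - w) \<le> s0" if "w \<ge> 0" for w using sq that p2 by (simp add: algebra_simps)
      have VV: "b*s0 + a*(0*b - q*(q0 - w)) \<le> q0*c + b*\<rho> + 3*(a*q)" if "w \<le> 3" for w
      proof -
        have "a*(q*w) \<le> a*(q*3)" using that aq0 a3p q1 p2 by (intro mult_left_mono) auto
        moreover have "q0*c = q0*(b*p) - q0*(q*a)" unfolding cd by (simp add: algebra_simps)
        moreover have "b*s0 = q0*(b*p) + b*\<rho>" by (simp add: sq(1) algebra_simps)
        ultimately show ?thesis by (simp only: algebra_simps; linarith)
      qed
      have VB: "q0*c + b*\<rho> + 3*(a*q) \<le> G + a"
      proof (cases "q0 = r")
        case True
        then have "\<rho> \<le> t - 1" using sq s0 ar by simp
        then have "b*\<rho> \<le> b*(t-1)" using b0 by (intro mult_left_mono) auto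
        moreover have "b*(t-1) = t*b - b" "q0*c = r*c" using True by (simp_all add: algebra_simps)
        ultimately show ?thesis using M2' c0 by linarith
      next
        case False
        then have "q0*c \<le> (r-1)*c" using q0r c0 aq0 by (intro mult_right_mono) auto
        moreover have "b*\<rho> \<le> b*(p-1)" using b0 sq by (intro mult_left_mono) auto
        moreover have "(r-1)*c = r*c - c" "b*(p-1) = b*p - b" "c = b*p - a*q" using cd by (simp_all add: algebra_simps)
        ultimately show ?thesis using M2' c0 B1 tb0 by linarith
      qed
      have ow: "okw a b p q G s0 (0, q0 - w)" if "0 \<le> w" "w \<le> 3" for w
      proof (rule okwI)
        show "p * (q0 - w) \<le> s0 + 0 * a" using pz[OF that(1)] by simp
        show "b * s0 + a * (0 * b - q * (q0 - w)) \<le> G + a" using VV[OF that(2)] VB by linarith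
      qed (use q03 that in auto)
      show ?thesis
      proof (rule wit4I')
        show "card {(0,q0-0),(0,q0-1),(0,q0-2),(0::int,q0-3)} = 4" by simp
      qed (rule ow; simp)+
    next
      case c3: True
      show ?thesis
      proof (cases "s0 < 2*p")
        case False
        have m: "b*s0 \<le> b*(3*p-1)" using c3 b0 by (intro mult_left_mono) auto
        show ?thesis
        proof (cases "s0 - 2*p + t < p")
          case True
          have m2: "b*s0 \<le> b*(3*p - t - 1)" using True b0 by (intro mult_left_mono) auto
          have v: "(r - (r+2))*(a*q) = -2*(a*q)" by (simp add: algebra_simps)
          show ?thesis
          proof (rule wit4I')
  show "card {(0,2),(0,1),(0,0),(1::int,r+2::int)} = 4" by simp
  show "okw a b p q G s0 (0,2)" by (rule okwI) (use s0 m m2 False True V1[of "r+2"] V0 v M1' M2' F1 cd aq0 ar r3 p2 t1 tp in \<open>((simp only: algebra_simps)?; linarith)\<close>)+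
  show "okw a b p q G s0 (0,1)" by (rule okwI) (use s0 m m2 False True V1[of "r+2"] V0 v M1' M2' F1 cd aq0 ar r3 p2 t1 tp in \<open>((simp only: algebra_simps)?; linarith)\<close>)+
  show "okw a b p q G s0 (0,0)" by (rule okwI) (use s0 m m2 False True V1[of "r+2"] V0 v M1' M2' F1 cd aq0 ar r3 p2 t1 tp in \<open>((simp only: algebra_simps)?; linarith)\<close>)+
  show "okw a b p q G s0 (1,r+2)" by (rule okwI) (use s0 m m2 False True V1[of "r+2"] V0 v M1' M2' F1 cd aq0 ar r3 p2 t1 tp in \<open>((simp only: algebra_simps)?; linarith)\<close>)+
qed
        next
          case False
          have v: "(r - (r+3))*(a*q) = -3*(a*q)" by (simp add: algebra_simps)
          show ?thesis
          proof (rule wit4I')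
  show "card {(0,2),(0,1),(0,0),(1::int,r+3::int)} = 4" by simp
  show "okw a b p q G s0 (0,2)" by (rule okwI) (use s0 m c3 False V1[of "r+3"] V0 v M1' M2' F1 cd aq0 ar r3 p2 t1 tp in \<open>((simp only: algebra_simps)?; linarith)\<close>)+
  show "okw a b p q G s0 (0,1)" by (rule okwI) (use s0 m c3 False V1[of "r+3"] V0 v M1' M2' F1 cd aq0 ar r3 p2 t1 tp in \<open>((simp only: algebra_simps)?; linarith)\<close>)+
  show "okw a b p q G s0 (0,0)" by (rule okwI) (use s0 m c3 False V1[of "r+3"] V0 v M1' M2' F1 cd aq0 ar r3 p2 t1 tp in \<open>((simp only: algebra_simps)?; linarith)\<close>)+
  show "okw a b p q G s0 (1,r+3)" by (rule okwI) (use s0 m c3 False V1[of "r+3"] V0 v M1' M2' F1 cd aq0 ar r3 p2 t1 tp in \<open>((simp only: algebra_simps)?; linarith)\<close>)+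
qed
        qed
      next
        case c2: True
        show ?thesis
        proof (cases "s0 < p")
          case False
          have m: "b*s0 \<le> b*(2*p-1)" using c2 b0 by (intro mult_left_mono) auto
          show ?thesis
          proof (cases "s0 - p + t < p")
            case True
            have m2: "b*s0 \<le> b*(2*p - t - 1)" using True b0 by (intro mult_left_mono) auto
            have v: "(r - (r+1))*(a*q) = -1*(a*q)" "(r - r)*(a*q) = 0" by (simp_all add: algebra_simps)
            show ?thesis
            proof (rule wit4I')
  show "card {(0,1),(0,0),(1,r+1),(1::int,r::int)} = 4" by simp
  show "okw a b p q G s0 (0,1)" by (rule okwI) (use s0 m m2 False True V1[of "r+1"] V1[of "r"] V0 v M1' M2' F1 B1 c0 rc0 tb0 cd aq0 ar r3 p2 t1 tp in \<open>((simp only: algebra_simps)?; linarith)\<close>)+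
  show "okw a b p q G s0 (0,0)" by (rule okwI) (use s0 m m2 False True V1[of "r+1"] V1[of "r"] V0 v M1' M2' F1 B1 c0 rc0 tb0 cd aq0 ar r3 p2 t1 tp in \<open>((simp only: algebra_simps)?; linarith)\<close>)+
  show "okw a b p q G s0 (1,r+1)" by (rule okwI) (use s0 m m2 False True V1[of "r+1"] V1[of "r"] V0 v M1' M2' F1 B1 c0 rc0 tb0 cd aq0 ar r3 p2 t1 tp in \<open>((simp only: algebra_simps)?; linarith)\<close>)+
  show "okw a b p q G s0 (1,r)" by (rule okwI) (use s0 m m2 False True V1[of "r+1"] V1[of "r"] V0 v M1' M2' F1 B1 c0 rc0 tb0 cd aq0 ar r3 p2 t1 tp in \<open>((simp only: algebra_simps)?; linarith)\<close>)+
qed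
          next
            case False
            have v: "(r - (r+2))*(a*q) = -2*(a*q)" "(r - (r+1))*(a*q) = -1*(a*q)" by (simp_all add: algebra_simps)
            show ?thesis
            proof (rule wit4I')
  show "card {(0,1),(0,0),(1,r+2),(1::int,r+1::int)} = 4" by simp
  show "okw a b p q G s0 (0,1)" by (rule okwI) (use s0 m c2 False V1[of "r+2"] V1[of "r+1"] V0 v M1' M2' F1 B1 c0 rc0 tb0 cd aq0 ar r3 p2 t1 tp in \<open>((simp only: algebra_simps)?; linarith)\<close>)+
  show "okw a b p q G s0 (0,0)" by (rule okwI) (use s0 m c2 False V1[of "r+2"] V1[of "r+1"] V0 v M1' M2' F1 B1 c0 rc0 tb0 cd aq0 ar r3 p2 t1 tp in \<open>((simp only: algebra_simps)?; linarith)\<close>)+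
  show "okw a b p q G s0 (1,r+2)" by (rule okwI) (use s0 m c2 False V1[of "r+2"] V1[of "r+1"] V0 v M1' M2' F1 B1 c0 rc0 tb0 cd aq0 ar r3 p2 t1 tp in \<open>((simp only: algebra_simps)?; linarith)\<close>)+
  show "okw a b p q G s0 (1,r+1)" by (rule okwI) (use s0 m c2 False V1[of "r+2"] V1[of "r+1"] V0 v M1' M2' F1 B1 c0 rc0 tb0 cd aq0 ar r3 p2 t1 tp in \<open>((simp only: algebra_simps)?; linarith)\<close>)+
qed
          qed
        next
          case c1: True
          have m: "b*s0 \<le> b*(p-1)" using c1 b0 by (intro mult_left_mono) auto
          show ?thesis
          proof (cases "s0 + t < p")
            case True
            have m2: "b*s0 \<le> b*(p - t - 1)" using True b0 by (intro mult_left_mono) auto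
            have v: "(r - (r-2))*(a*q) = 2*(a*q)" "(r - (r-1))*(a*q) = 1*(a*q)" "(r - r)*(a*q) = 0" by (simp_all add: algebra_simps)
            show ?thesis
            proof (rule wit4I')
  show "card {(0,0),(1,r),(1,r-1),(1::int,r-2::int)} = 4" by simp
  show "okw a b p q G s0 (0,0)" by (rule okwI) (use s0 m m2 True V1[of "r"] V1[of "r-1"] V1[of "r-2"] V0 v M1' M2' F1 B1 c0 rc0 tb0 cd aq0 ar r3 p2 t1 tp in \<open>((simp only: algebra_simps)?; linarith)\<close>)+
  show "okw a b p q G s0 (1,r)" by (rule okwI) (use s0 m m2 True V1[of "r"] V1[of "r-1"] V1[of "r-2"] V0 v M1' M2' F1 B1 c0 rc0 tb0 cd aq0 ar r3 p2 t1 tp in \<open>((simp only: algebra_simps)?; linarith)\<close>)+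
  show "okw a b p q G s0 (1,r-1)" by (rule okwI) (use s0 m m2 True V1[of "r"] V1[of "r-1"] V1[of "r-2"] V0 v M1' M2' F1 B1 c0 rc0 tb0 cd aq0 ar r3 p2 t1 tp in \<open>((simp only: algebra_simps)?; linarith)\<close>)+
  show "okw a b p q G s0 (1,r-2)" by (rule okwI) (use s0 m m2 True V1[of "r"] V1[of "r-1"] V1[of "r-2"] V0 v M1' M2' F1 B1 c0 rc0 tb0 cd aq0 ar r3 p2 t1 tp in \<open>((simp only: algebra_simps)?; linarith)\<close>)+
qed
          next
            case False
            have v: "(r - (r+1))*(a*q) = -1*(a*q)" "(r - (r-1))*(a*q) = 1*(a*q)" "(r - r)*(a*q) = 0" by (simp_all add: algebra_simps)
            show ?thesis
            proof (rule wit4I')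
  show "card {(0,0),(1,r+1),(1,r),(1::int,r-1::int)} = 4" by simp
  show "okw a b p q G s0 (0,0)" by (rule okwI) (use s0 m False V1[of "r+1"] V1[of "r"] V1[of "r-1"] V0 v M1' M2' F1 B1 c0 rc0 tb0 cd aq0 ar r3 p2 t1 tp in \<open>((simp only: algebra_simps)?; linarith)\<close>)+
  show "okw a b p q G s0 (1,r+1)" by (rule okwI) (use s0 m False V1[of "r+1"] V1[of "r"] V1[of "r-1"] V0 v M1' M2' F1 B1 c0 rc0 tb0 cd aq0 ar r3 p2 t1 tp in \<open>((simp only: algebra_simps)?; linarith)\<close>)+
  show "okw a b p q G s0 (1,r)" by (rule okwI) (use s0 m False V1[of "r+1"] V1[of "r"] V1[of "r-1"] V0 v M1' M2' F1 B1 c0 rc0 tb0 cd aq0 ar r3 p2 t1 tp in \<open>((simp only: algebra_simps)?; linarith)\<close>)+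
  show "okw a b p q G s0 (1,r-1)" by (rule okwI) (use s0 m False V1[of "r+1"] V1[of "r"] V1[of "r-1"] V0 v M1' M2' F1 B1 c0 rc0 tb0 cd aq0 ar r3 p2 t1 tp in \<open>((simp only: algebra_simps)?; linarith)\<close>)+
qed
          qed
        qed
      qed
    qed
  qed
qed



lemma jbig:
  fixes a b p q c s j z G :: int
  assumes cd: "c = b*p - q*a" and a0: "a \<ge> 0" and q0: "q \<ge> 0" and p0: "p \<ge> 0" and c0: "c \<ge> 0" and j2: "j \<ge> 2"
    and h1: "p*z \<le> s + j*a" and h2: "b*s + a*(j*b - q*z) \<le> G"
  shows "(s + 2*a)*c \<le> p*G"
proof -
  have id: "p*(b*s + a*(j*b - q*z)) = (s + j*a)*c + (a*q)*(s + j*a - p*z)" unfolding cd by (simp add: algebra_simps)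
  have n: "(a*q)*(s + j*a - p*z) \<ge> 0" using h1 a0 q0 by simp
  have m: "p*(b*s + a*(j*b - q*z)) \<le> p*G" using h2 p0 by (rule mult_left_mono)
  have "2*a \<le> j*a" using j2 a0 by (intro mult_right_mono) auto
  then have "(s + 2*a)*c \<le> (s + j*a)*c" using c0 by (intro mult_right_mono) auto
  then show ?thesis using id n m by linarith
qed

lemma g_common:
  fixes a b p q c r t :: int
  assumes ar: "a = r*p + t" and t1: "1 \<le> t" and tp: "t \<le> p" and r3: "r \<ge> 3" and pq: "2*q \<le> p" and q1: "1 \<le> q"
    and ab5: "5*a \<le> 2*b" and cd: "c = b*p - q*a"
  shows "p \<ge> 2" "a \<ge> 3*p + 1" "b > 0" "5*(a*q) \<le> b*p" "a*q > 0" "c \<ge> a*q"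
    "a*b = r*c + t*b + r*(a*q)" "a*c = r*(p*c) + t*c" "p*c \<ge> c" "r*(p*c) \<ge> 3*(p*c)" "p*b > 0" "p*a > 0"
    "t*c \<ge> t*(a*q)" "p*c \<ge> p*(a*q)"
proof -
  show p2: "p \<ge> 2" using pq q1 by simp
  have "3*p \<le> r*p" using r3 p2 by (intro mult_right_mono) auto
  then show a3p: "a \<ge> 3*p + 1" using ar t1 by simp
  show b0: "b > 0" using ab5 a3p p2 by simp
  show B1: "5*(a*q) \<le> b*p"
  proof -
    have "p*(5*a) \<le> p*(2*b)" using ab5 p2 by (intro mult_left_mono) auto
    moreover have "(2*q)*(5*a) \<le> p*(5*a)" using pq a3p p2 by (intro mult_right_mono) auto
    ultimately show ?thesis by (simp add: algebra_simps)
  qed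
  show aq0: "a*q > 0" using a3p p2 q1 by simp
  show c0: "c \<ge> a*q" using B1 cd aq0 by (simp add: algebra_simps)
  have e1: "a*b = r*(b*p) + t*b" unfolding ar by (simp add: algebra_simps)
  have e2: "r*(b*p) = r*c + r*(a*q)" unfolding cd by (simp add: algebra_simps)
  show "a*b = r*c + t*b + r*(a*q)" using e1 e2 by linarith
  show "a*c = r*(p*c) + t*c" unfolding ar by (simp add: algebra_simps)
  show "p*c \<ge> c" using p2 c0 aq0 by (simp add: mult_le_cancel_right1)
  show "r*(p*c) \<ge> 3*(p*c)" using r3 p2 c0 aq0 by (intro mult_right_mono) auto
  show "p*b > 0" "p*a > 0" using p2 b0 a3p by simp_all
  show "t*c \<ge> t*(a*q)" using t1 c0 by (intro mult_left_mono) auto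
  show "p*c \<ge> p*(a*q)" using p2 c0 by (intro mult_left_mono) auto
qed

lemma arith_g_cnt1:
  fixes a b p q c r t :: int
  assumes ar: "a = r*p + t" and t1: "1 \<le> t" and tp: "t \<le> p" and r3: "r \<ge> 3" and pq: "2*q \<le> p" and q1: "1 \<le> q"
    and ab5: "5*a \<le> 2*b" and cd: "c = b*p - q*a"
  shows "cnt_ok a b p q ((t-1)*b + (r+3)*c - a) (3*p - 1)"
proof -
  note gc = g_common[OF assms]
  have p2: "p \<ge> 2" and a3p: "a \<ge> 3*p + 1" and b0: "b > 0" and aq0: "a*q > 0" and c0: "c \<ge> a*q" using gc by auto
  show ?thesis
  proof (rule cnt3I[where u="(0,0)" and v="(0,1)" and w="(0,2)"])
    show "a dvd (t-1)*b + (r+3)*c - a - b * (3*p - 1)"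
      by (rule dvdI[of _ _ "b - r*q - 3*q - 1"]) (simp add: cd ar algebra_simps)
  next
    fix j z assume hj: "0 \<le> j" and hz: "0 \<le> z" and h1: "p*z \<le> (3*p - 1) + j*a"
      and h2: "b*(3*p - 1) + a*(j*b - q*z) \<le> (t-1)*b + (r+3)*c - a"
    have zl: "p*z \<ge> p*w" if "z \<ge> w" for w using that p2 by (intro mult_left_mono) auto
    show "(j,z) \<in> {(0,0),(0,1),(0,2)}"
    proof (cases "j = 0")
      case True
      have "z \<le> 2"
      proof (rule ccontr)
        assume "\<not> z \<le> 2"
        then have "p*z \<ge> p*3" using zl by simp
        then show False using h1 True by simp
      qed
      then show ?thesis using True hz by auto
    next
      case j0: False
      show ?thesis
      proof (cases "j = 1")
        case True
        have "z \<le> r + 3"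
        proof (rule ccontr)
          assume "\<not> z \<le> r + 3"
          then have "p*z \<ge> p*(r+4)" using zl by simp
          moreover have "p*(r+4) = r*p + 4*p" by (simp add: algebra_simps)
          ultimately show False using h1 True ar tp by simp
        qed
        then have "a*q*z \<le> a*q*(r+3)" using aq0 by (intro mult_left_mono) auto
        moreover have "b*(3*p - 1) + a*(j*b - q*z) = b*(3*p-1) + a*b - a*q*z" using True by (simp add: algebra_simps)
        moreover have "(t-1)*b + (r+3)*c = b*(3*p-1) + a*b - a*q*(r+3)" unfolding cd ar by (simp add: algebra_simps)
        ultimately have False using h2 gc by linarith
        then show ?thesis by simp
      next
        case False
        then have j2: "j \<ge> 2" using j0 hj by simp
        have J: "(3*p - 1 + 2*a)*c \<le> p*((t-1)*b + (r+3)*c - a)"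
          by (rule jbig[OF cd _ _ _ _ j2 h1 h2]) (use a3p p2 q1 c0 aq0 in linarith)+
        have Ftb: "p*(t*b) = t*c + t*(a*q)" unfolding cd by (simp add: algebra_simps)
        have Frc: "r*(p*c) \<ge> c" using gc by linarith
        have L: "(3*p - 1 + 2*a)*c = 3*(p*c) - c + 2*(a*c)" by (simp add: algebra_simps)
        have R: "p*((t-1)*b + (r+3)*c - a) = p*(t*b) - p*b + r*(p*c) + 3*(p*c) - p*a" by (simp add: algebra_simps)
        have False using J L R Ftb Frc gc by linarith
        then show ?thesis by simp
      qed
    qed
  qed (use a3p p2 in auto)
qed

lemma arith_g_cnt2:
  fixes a b p q c r t :: int
  assumes ar: "a = r*p + t" and t1: "1 \<le> t" and tp: "t \<le> p" and r3: "r \<ge> 3" and pq: "2*q \<le> p" and q1: "1 \<le> q"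
    and ab5: "5*a \<le> 2*b" and cd: "c = b*p - q*a" and c2: "t*b < q*a"
  shows "cnt_ok a b p q ((p-1)*b + (r+2)*c - a) (3*p - t - 1)"
proof -
  note gc = g_common[OF ar t1 tp r3 pq q1 ab5 cd]
  have p2: "p \<ge> 2" and a3p: "a \<ge> 3*p + 1" and b0: "b > 0" and aq0: "a*q > 0" and c0: "c \<ge> a*q" using gc by auto
  have tp': "t < p"
  proof (rule ccontr)
    assume "\<not> t < p" then have "t = p" using tp by simp
    then show False using c2 gc(4) aq0 by (simp add: algebra_simps)
  qed
  show ?thesis
  proof (rule cnt3I[where u="(0,0)" and v="(0,1)" and w="(0,2)"])
    show "a dvd (p-1)*b + (r+2)*c - a - b * (3*p - t - 1)"
      by (rule dvdI[of _ _ "b - r*q - 2*q - 1"]) (simp add: cd ar algebra_simps)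
  next
    fix j z assume hj: "0 \<le> j" and hz: "0 \<le> z" and h1: "p*z \<le> (3*p - t - 1) + j*a"
      and h2: "b*(3*p - t - 1) + a*(j*b - q*z) \<le> (p-1)*b + (r+2)*c - a"
    have zl: "p*z \<ge> p*w" if "z \<ge> w" for w using that p2 by (intro mult_left_mono) auto
    show "(j,z) \<in> {(0,0),(0,1),(0,2)}"
    proof (cases "j = 0")
      case True
      have "z \<le> 2"
      proof (rule ccontr)
        assume "\<not> z \<le> 2"
        then have "p*z \<ge> p*3" using zl by simp
        then show False using h1 True t1 by simp
      qed
      then show ?thesis using True hz by auto
    next
      case j0: False
      show ?thesis
      proof (cases "j = 1")
        case True
        have "z \<le> r + 2"
        proof (rule ccontr)
          assume "\<not> z \<le> r + 2"
          then have "p*z \<ge> p*(r+3)" using zl by simp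
          moreover have "p*(r+3) = r*p + 3*p" by (simp add: algebra_simps)
          ultimately show False using h1 True ar by simp
        qed
        then have "a*q*z \<le> a*q*(r+2)" using aq0 by (intro mult_left_mono) auto
        moreover have "b*(3*p - t - 1) + a*(j*b - q*z) = b*(3*p - t - 1) + a*b - a*q*z" using True by (simp add: algebra_simps)
        moreover have "(p-1)*b + (r+2)*c = b*(3*p - t - 1) + a*b - a*q*(r+2)" unfolding cd ar by (simp add: algebra_simps)
        ultimately have False using h2 gc by linarith
        then show ?thesis by simp
      next
        case False
        then have j2: "j \<ge> 2" using j0 hj by simp
        have J: "(3*p - t - 1 + 2*a)*c \<le> p*((p-1)*b + (r+2)*c - a)"
          by (rule jbig[OF cd _ _ _ _ j2 h1 h2]) (use a3p p2 q1 c0 aq0 in linarith)+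
        have Fpc: "p*c = p*(b*p) - p*(a*q)" unfolding cd by (simp add: algebra_simps)
        have L: "(3*p - t - 1 + 2*a)*c = 3*(p*c) - t*c - c + 2*(a*c)" by (simp add: algebra_simps)
        have R: "p*((p-1)*b + (r+2)*c - a) = p*(b*p) - p*b + r*(p*c) + 2*(p*c) - p*a" by (simp add: algebra_simps)
        have tc: "t*c \<ge> 0" using t1 c0 aq0 by simp
        have False using J L R Fpc tc gc by linarith
        then show ?thesis by simp
      qed
    qed
  qed (use a3p p2 tp' t1 in auto)
qed

lemma part_g:
  assumes "i \<ge> 3" "k \<ge> 3"
  shows "(let r = (F i - 1) div F k in
        r \<ge> 3 \<longrightarrow>
          ((F i - r * F k) * F (i+2) \<ge> F (k-2) * F i \<longrightarrow>
             p_frobenius 3 [fib i, fib (i+2), fib (i+k)]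
               = (F i - r * F k - 1) * F (i+2) + (r + 3) * F (i+k) - F i)
          \<and> ((F i - r * F k) * F (i+2) < F (k-2) * F i \<longrightarrow>
             p_frobenius 3 [fib i, fib (i+2), fib (i+k)]
               = (F k - 1) * F (i+2) + (r + 2) * F (i+k) - F i))"
proof -
  note fb = fib_base[OF assms(1)]
  note fk = fib_k2[OF assms(2)]
  define r where "r = (F i - 1) div F k"
  have pk: "F k > 0" using fk by simp
  have dm: "F i - 1 = r * F k + (F i - 1) mod F k" unfolding r_def by simp
  have md: "0 \<le> (F i - 1) mod F k" "(F i - 1) mod F k < F k" using pk by simp_all
  have ar: "F i = r * F k + (F i - r * F k)" by simp
  have t1: "1 \<le> F i - r * F k" and tp: "F i - r * F k \<le> F k" using dm md by linarith+
  have ab5: "5 * F i \<le> 2 * F (i+2)" using fb by linarith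
  have cd: "F (i+k) = F (i+2) * F k - F (k-2) * F i" using fib_shift_int[of k i] assms by simp
  show ?thesis unfolding Let_def r_def[symmetric]
  proof (intro impI conjI)
    assume r3: "r \<ge> 3"
    note base = ar t1 tp r3 fk(2) fk(1) ab5 cd
    {
      assume c1: "(F i - r * F k) * F (i+2) \<ge> F (k-2) * F i"
      show "p_frobenius 3 [fib i, fib (i+2), fib (i+k)]
               = (F i - r * F k - 1) * F (i+2) + (r + 3) * F (i+k) - F i"
      proof (rule frob_fib[OF assms])
        show "cnt_ok (F i) (F (i+2)) (F k) (F (k-2)) ((F i - r * F k - 1) * F (i+2) + (r + 3) * F (i+k) - F i) (3 * F k - 1)"
          by (rule arith_g_cnt1[OF base])
        have "(F k - 1) * F (i+2) + (r+2) * F (i+k) \<le> (F i - r * F k - 1) * F (i+2) + (r + 3) * F (i+k)"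
          using c1 cd by (simp add: algebra_simps)
        then show "wit_ok (F i) (F (i+2)) (F k) (F (k-2)) ((F i - r * F k - 1) * F (i+2) + (r + 3) * F (i+k) - F i)"
          by (intro arith_g_wit[OF base]) simp_all
      qed
    }
    {
      assume c2: "(F i - r * F k) * F (i+2) < F (k-2) * F i"
      show "p_frobenius 3 [fib i, fib (i+2), fib (i+k)]
               = (F k - 1) * F (i+2) + (r + 2) * F (i+k) - F i"
      proof (rule frob_fib[OF assms])
        show "cnt_ok (F i) (F (i+2)) (F k) (F (k-2)) ((F k - 1) * F (i+2) + (r + 2) * F (i+k) - F i) (3 * F k - (F i - r * F k) - 1)"
          by (rule arith_g_cnt2[OF base c2])
        have "(F i - r * F k - 1) * F (i+2) + (r + 3) * F (i+k) \<le> (F k - 1) * F (i+2) + (r+2) * F (i+k)"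
          using c2 cd by (simp add: algebra_simps)
        then show "wit_ok (F i) (F (i+2)) (F k) (F (k-2)) ((F k - 1) * F (i+2) + (r + 2) * F (i+k) - F i)"
          by (intro arith_g_wit[OF base]) simp_all
      qed
    }
  qed
qed


theorem theorem4:
  fixes i k :: nat
  assumes "i \<ge> 3" and "k \<ge> 3"
  shows
   "(k \<ge> i + 3 \<longrightarrow>
       p_frobenius 3 [fib i, fib (i+2), fib (i+k)] = (4 * F i - 1) * F (i+2) - F i)
    \<and> p_frobenius 3 [fib i, fib (i+2), fib (2*i+2)]
        = (F i - 1) * F (i+2) + F (2*i+2) - F i
    \<and> p_frobenius 3 [fib i, fib (i+2), fib (2*i+1)]
        = (F i + F (i-2) - 1) * F (i+2) + F (2*i+1) - F i
    \<and> p_frobenius 3 [fib i, fib (i+2), fib (2*i)]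
        = (F i - 1) * F (i+2) + 2 * F (2*i) - F i
    \<and> (i \<ge> 4 \<longrightarrow> p_frobenius 3 [fib i, fib (i+2), fib (2*i-1)]
        = (F (i-2) - 1) * F (i+2) + 3 * F (2*i-1) - F i)
    \<and> (i \<ge> 6 \<longrightarrow> p_frobenius 3 [fib i, fib (i+2), fib (2*i-2)]
        = (F (i-5) - 1) * F (i+2) + 5 * F (2*i-2) - F i)
    \<and> p_frobenius 3 [fib 5, fib 7, fib 8] = F 7 + 4 * F 8 - F 5
    \<and> F 7 + 4 * F 8 - F 5 = 92
    \<and> (let r = (F i - 1) div F k in
        r \<ge> 3 \<longrightarrow>
          ((F i - r * F k) * F (i+2) \<ge> F (k-2) * F i \<longrightarrow>
             p_frobenius 3 [fib i, fib (i+2), fib (i+k)]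
               = (F i - r * F k - 1) * F (i+2) + (r + 3) * F (i+k) - F i)
          \<and> ((F i - r * F k) * F (i+2) < F (k-2) * F i \<longrightarrow>
             p_frobenius 3 [fib i, fib (i+2), fib (i+k)]
               = (F k - 1) * F (i+2) + (r + 2) * F (i+k) - F i))"
proof (intro conjI)
  show "k \<ge> i + 3 \<longrightarrow>
       p_frobenius 3 [fib i, fib (i+2), fib (i+k)] = (4 * F i - 1) * F (i+2) - F i"
    by (intro impI) (rule part_a[OF assms(1)])
  show "p_frobenius 3 [fib i, fib (i+2), fib (2*i+2)] = (F i - 1) * F (i+2) + F (2*i+2) - F i"
    by (rule part_b[OF assms(1)])
  show "p_frobenius 3 [fib i, fib (i+2), fib (2*i+1)] = (F i + F (i-2) - 1) * F (i+2) + F (2*i+1) - F i"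
    by (rule part_c[OF assms(1)])
  show "p_frobenius 3 [fib i, fib (i+2), fib (2*i)] = (F i - 1) * F (i+2) + 2 * F (2*i) - F i"
    by (rule part_d[OF assms(1)])
  show "i \<ge> 4 \<longrightarrow> p_frobenius 3 [fib i, fib (i+2), fib (2*i-1)]
        = (F (i-2) - 1) * F (i+2) + 3 * F (2*i-1) - F i"
    by (intro impI) (rule part_e)
  show "i \<ge> 6 \<longrightarrow> p_frobenius 3 [fib i, fib (i+2), fib (2*i-2)]
        = (F (i-5) - 1) * F (i+2) + 5 * F (2*i-2) - F i"
    by (intro impI) (rule part_f)
  show "p_frobenius 3 [fib 5, fib 7, fib 8] = F 7 + 4 * F 8 - F 5" by (rule part_conc(1))
  show "F 7 + 4 * F 8 - F 5 = 92" by (rule part_conc(2))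
  show "let r = (F i - 1) div F k in
        r \<ge> 3 \<longrightarrow>
          ((F i - r * F k) * F (i+2) \<ge> F (k-2) * F i \<longrightarrow>
             p_frobenius 3 [fib i, fib (i+2), fib (i+k)]
               = (F i - r * F k - 1) * F (i+2) + (r + 3) * F (i+k) - F i)
          \<and> ((F i - r * F k) * F (i+2) < F (k-2) * F i \<longrightarrow>
             p_frobenius 3 [fib i, fib (i+2), fib (i+k)]
               = (F k - 1) * F (i+2) + (r + 2) * F (i+k) - F i)"
    by (rule part_g[OF assms])
qed

end
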